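(* Let $Y^A$ be a vector field on an open set $\mathscr U\subset S^2$ satisfying $\nabla^AY^B+\nabla^BY^A-\nabla_CY^C\sigma^{AB}=0$ on $\mathscr U$, set $Y^1=\tfrac12\nabla_CY^C$, and let $u$ be a smooth function with compact support in $\mathscr U$. Then \[\int_{\mathscr U}Y^1\big[2\nabla_A\nabla_Bu\,\nabla^A\nabla^Bu-(\Delta u)^2\big]=\int_{\mathscr U}Y^1\big[(\Delta+2)u\big]^2+2\int_{\mathscr U}u\,(\nabla^A\nabla^BY^1)\big(\nabla_A\nabla_Bu-\tfrac12\Delta u\,\sigma_{AB}\big).\]
   Context: $(S^2,\sigma_{AB})$ is the unit round sphere with Levi-Civita connection $\nabla$ and Laplacian $\Delta$; indices raised/lowered with $\sigma$; integrals with respect to area measure; $Y^A$ smooth. *)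

theory Defs
  imports "HOL-Analysis.Analysis"
begin

text \<open>The unit round sphere S2 is realised extrinsically as sphere 0 1 in real^3.
  A function (or tangent vector field) f given on a subset U of S2 is represented
  by its 0-homogeneous extension to the open cone over U; smoothness on U and the
  intrinsic derivatives are computed from this extension.\<close>

definition hext :: "(real^3 \<Rightarrow> 'b) \<Rightarrow> real^3 \<Rightarrow> 'b" where
  "hext f y = f (sgn y)"

definition scone :: "(real^3) set \<Rightarrow> (real^3) set" where
  "scone U = {y. y \<noteq> 0 \<and> sgn y \<in> U}"

fun Ck :: "nat \<Rightarrow> 'a set \<Rightarrow> ('a::real_normed_vector \<Rightarrow> 'b::real_normed_vector) \<Rightarrow> bool" where
  "Ck 0 S f = continuous_on S f"
| "Ck (Suc n) S f = (continuous_on S f \<and> (\<forall>x\<in>S. f differentiable (at x))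
      \<and> (\<forall>v. Ck n S (\<lambda>x. frechet_derivative f (at x) v)))"

definition Cinf_on :: "'a set \<Rightarrow> ('a::real_normed_vector \<Rightarrow> 'b::real_normed_vector) \<Rightarrow> bool" where
  "Cinf_on S f = (\<forall>n. Ck n S f)"

definition D1 :: "('a::real_normed_vector \<Rightarrow> 'b::real_normed_vector) \<Rightarrow> 'a \<Rightarrow> 'a \<Rightarrow> 'b" where
  "D1 f x v = frechet_derivative f (at x) v"

definition D2 :: "('a::real_normed_vector \<Rightarrow> 'b::real_normed_vector) \<Rightarrow> 'a \<Rightarrow> 'a \<Rightarrow> 'a \<Rightarrow> 'b" where
  "D2 f x v w = frechet_derivative (\<lambda>y. frechet_derivative f (at y) v) (at x) w"

definition tproj :: "real^3 \<Rightarrow> real^3 \<Rightarrow> real^3" where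
  "tproj x v = v - (v \<bullet> x) *\<^sub>R x"

text \<open>Covariant Hessian nabla_A nabla_B u at x in S2, evaluated on tangent vectors
  (for the 0-homogeneous extension the radial correction vanishes).\<close>
definition sph_hess :: "(real^3 \<Rightarrow> real) \<Rightarrow> real^3 \<Rightarrow> real^3 \<Rightarrow> real^3 \<Rightarrow> real" where
  "sph_hess u x v w = D2 (hext u) x v w"

definition sph_lap :: "(real^3 \<Rightarrow> real) \<Rightarrow> real^3 \<Rightarrow> real" where
  "sph_lap u x = (\<Sum>b\<in>Basis. sph_hess u x (tproj x b) (tproj x b))"

definition sph_hess_sq :: "(real^3 \<Rightarrow> real) \<Rightarrow> real^3 \<Rightarrow> real" where
  "sph_hess_sq u x = (\<Sum>b\<in>Basis. \<Sum>c\<in>Basis. (sph_hess u x (tproj x b) (tproj x c))^2)"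

definition sph_hess_pair :: "(real^3 \<Rightarrow> real) \<Rightarrow> (real^3 \<Rightarrow> real) \<Rightarrow> real^3 \<Rightarrow> real" where
  "sph_hess_pair f u x = (\<Sum>b\<in>Basis. \<Sum>c\<in>Basis.
      sph_hess f x (tproj x b) (tproj x c) *
      (sph_hess u x (tproj x b) (tproj x c) - sph_lap u x / 2 * (tproj x b \<bullet> tproj x c)))"

definition cov_deriv :: "(real^3 \<Rightarrow> real^3) \<Rightarrow> real^3 \<Rightarrow> real^3 \<Rightarrow> real^3 \<Rightarrow> real" where
  "cov_deriv Y x v w = D1 (hext Y) x v \<bullet> w"

definition sph_div :: "(real^3 \<Rightarrow> real^3) \<Rightarrow> real^3 \<Rightarrow> real" where
  "sph_div Y x = (\<Sum>b\<in>Basis. cov_deriv Y x (tproj x b) (tproj x b))"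

definition conformal_killing_on :: "(real^3) set \<Rightarrow> (real^3 \<Rightarrow> real^3) \<Rightarrow> bool" where
  "conformal_killing_on U Y = (\<forall>x\<in>U. \<forall>v w. v \<bullet> x = 0 \<longrightarrow> w \<bullet> x = 0 \<longrightarrow>
      cov_deriv Y x v w + cov_deriv Y x w v - sph_div Y x * (v \<bullet> w) = 0)"

definition sph_par :: "real \<times> real \<Rightarrow> real^3" where
  "sph_par p = vector [sin (fst p) * cos (snd p), sin (fst p) * sin (snd p), cos (fst p)]"

definition sphere_integral :: "(real^3 \<Rightarrow> real) \<Rightarrow> real" where
  "sphere_integral f = integral (cbox (0, 0) (pi, 2 * pi)) (\<lambda>p. f (sph_par p) * sin (fst p))"

definition sphere_integral_on :: "(real^3) set \<Rightarrow> (real^3 \<Rightarrow> real) \<Rightarrow> real" where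
  "sphere_integral_on U f = sphere_integral (\<lambda>x. if x \<in> U then f x else 0)"

end

theory Submission
  imports Defs
begin


abbreviation fd :: "('a::real_normed_vector \<Rightarrow> 'b::real_normed_vector) \<Rightarrow> 'a \<Rightarrow> 'a \<Rightarrow> 'b" where
  "fd f x \<equiv> frechet_derivative f (at x)"

lemma fd_works: "f differentiable (at x) \<Longrightarrow> (f has_derivative fd f x) (at x)"
  using frechet_derivative_works by blast

lemma fd_eq: "(f has_derivative f') (at x) \<Longrightarrow> fd f x = f'"
  by (simp add: frechet_derivative_at[symmetric])

lemma fd_linear: "f differentiable (at x) \<Longrightarrow> linear (fd f x)"
  by (rule linear_frechet_derivative)

lemma fd_bl: "f differentiable (at x) \<Longrightarrow> bounded_linear (fd f x)"
  using fd_works has_derivative_bounded_linear by blast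

lemma fd_cong_open:
  assumes "open S" "x \<in> S" "\<And>y. y \<in> S \<Longrightarrow> f y = g y" "f differentiable (at x)"
  shows "fd g x = fd f x" "g differentiable (at x)"
proof -
  have "(g has_derivative fd f x) (at x)"
    by (rule has_derivative_transform_within_open[OF fd_works[OF assms(4)] assms(1,2)]) (use assms(3) in auto)
  then show "fd g x = fd f x" "g differentiable (at x)"
    by (auto simp: fd_eq differentiable_def)
qed

lemma Ck_cong: "open S \<Longrightarrow> (\<And>x. x\<in>S \<Longrightarrow> f x = g x) \<Longrightarrow> Ck n S f \<Longrightarrow> Ck n S g"
proof (induction n arbitrary: f g)
  case 0 then show ?case using continuous_on_cong by (metis Ck.simps(1))
next
  case (Suc n)
  have c: "continuous_on S g" using Suc.prems continuous_on_cong by (metis Ck.simps(2))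
  have d: "\<And>x. x\<in>S \<Longrightarrow> fd g x = fd f x \<and> g differentiable (at x)"
    using fd_cong_open[OF Suc.prems(1) _ Suc.prems(2)] Suc.prems(3) by auto
  have "Ck n S (\<lambda>x. fd g x v)" for v
    by (rule Suc.IH[of "\<lambda>x. fd f x v"]) (use Suc.prems d in auto)
  then show ?case using c d by auto
qed

lemma Ck_mono: "Ck (Suc n) S f \<Longrightarrow> Ck n S f"
proof (induction n arbitrary: f)
  case 0 then show ?case by simp
next
  case (Suc n) then show ?case by (metis Ck.simps(2))
qed


lemma Ck_le: "Ck n S f \<Longrightarrow> m \<le> n \<Longrightarrow> Ck m S f"
proof (induction n arbitrary: m)
  case 0 then show ?case by simp
next
  case (Suc n) then show ?case by (metis Ck_mono le_Suc_eq)
qed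

lemma Ck_cont: "Ck n S f \<Longrightarrow> continuous_on S f"
  by (cases n) auto

lemma Ck_diff: "Ck (Suc n) S f \<Longrightarrow> x \<in> S \<Longrightarrow> f differentiable (at x)"
  by auto

lemma Ck_D: "Ck (Suc n) S f \<Longrightarrow> Ck n S (\<lambda>x. fd f x v)"
  by auto

lemma Cinf_Ck: "Cinf_on S f \<Longrightarrow> Ck n S f"
  by (simp add: Cinf_on_def)

lemma Cinf_D: "Cinf_on S f \<Longrightarrow> Cinf_on S (\<lambda>x. fd f x v)"
  unfolding Cinf_on_def by (metis Ck.simps(2))

lemma Cinf_diff: "Cinf_on S f \<Longrightarrow> x \<in> S \<Longrightarrow> f differentiable (at x)"
  unfolding Cinf_on_def by (metis Ck.simps(2))

lemma Cinf_cont: "Cinf_on S f \<Longrightarrow> continuous_on S f"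
  unfolding Cinf_on_def by (metis Ck.simps(1))

lemma Cinf_cong: "open S \<Longrightarrow> (\<And>x. x\<in>S \<Longrightarrow> f x = g x) \<Longrightarrow> Cinf_on S f \<Longrightarrow> Cinf_on S g"
  unfolding Cinf_on_def using Ck_cong by blast


lemma Ck_subset: "Ck n S f \<Longrightarrow> T \<subseteq> S \<Longrightarrow> Ck n T f"
proof (induction n arbitrary: f)
  case 0 then show ?case using continuous_on_subset by auto
next
  case (Suc n) then show ?case using continuous_on_subset by auto
qed

lemma Cinf_subset: "Cinf_on S f \<Longrightarrow> T \<subseteq> S \<Longrightarrow> Cinf_on T f"
  unfolding Cinf_on_def using Ck_subset by blast

lemma Ck_const: "Ck n S (\<lambda>x. c)"
proof (induction n arbitrary: c)
  case 0 then show ?case by simp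
next
  case (Suc n) then show ?case by simp
qed

lemma Ck_bl: "bounded_linear L \<Longrightarrow> Ck n S L"
proof (induction n)
  case 0 then show ?case by (simp add: linear_continuous_on)
next
  case (Suc n)
  have "fd L x = L" for x using Suc.prems by (simp add: fd_eq bounded_linear_imp_has_derivative)
  moreover have "continuous_on S L" using Suc.prems by (rule linear_continuous_on)
  moreover have "L differentiable (at x)" for x using Suc.prems by (rule bounded_linear_imp_differentiable)
  ultimately show ?case by (simp add: Ck_const)
qed

lemma Ck_blcomp: "bounded_linear L \<Longrightarrow> open S \<Longrightarrow> Ck n S f \<Longrightarrow> Ck n S (\<lambda>x. L (f x))"
proof (induction n arbitrary: f)
  case 0 then show ?case by (simp add: bounded_linear.continuous_on)
next
  case (Suc n)
  have d: "x\<in>S \<Longrightarrow> ((\<lambda>x. L (f x)) has_derivative (\<lambda>v. L (fd f x v))) (at x)" for x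
    using Suc.prems(3) by - (rule bounded_linear.has_derivative[OF Suc.prems(1)]; rule fd_works; auto)
  have "Ck n S (\<lambda>x. fd (\<lambda>x. L (f x)) x v)" for v
  proof (rule Ck_cong[OF Suc.prems(2), of "\<lambda>x. L (fd f x v)"])
    show "x \<in> S \<Longrightarrow> L (fd f x v) = fd (\<lambda>x. L (f x)) x v" for x using fd_eq[OF d, of x] by simp
    show "Ck n S (\<lambda>x. L (fd f x v))" using Suc.IH[OF Suc.prems(1,2)] Suc.prems(3) by simp
  qed
  moreover have "continuous_on S (\<lambda>x. L (f x))"
    using Suc.prems by (simp add: bounded_linear.continuous_on)
  moreover have "x\<in>S \<Longrightarrow> (\<lambda>x. L (f x)) differentiable (at x)" for x using d differentiableI by blast
  ultimately show ?case by auto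
qed

lemma Ck_add: "open S \<Longrightarrow> Ck n S f \<Longrightarrow> Ck n S g \<Longrightarrow> Ck n S (\<lambda>x. f x + g x)"
proof (induction n arbitrary: f g)
  case 0 then show ?case by (simp add: continuous_on_add)
next
  case (Suc n)
  have d: "x\<in>S \<Longrightarrow> ((\<lambda>x. f x + g x) has_derivative (\<lambda>v. fd f x v + fd g x v)) (at x)" for x
    using Suc.prems(2,3) by - (rule has_derivative_add; rule fd_works; auto)
  have "Ck n S (\<lambda>x. fd (\<lambda>x. f x + g x) x v)" for v
  proof (rule Ck_cong[OF Suc.prems(1), of "\<lambda>x. fd f x v + fd g x v"])
    show "x \<in> S \<Longrightarrow> fd f x v + fd g x v = fd (\<lambda>x. f x + g x) x v" for x using fd_eq[OF d, of x] by simp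
    show "Ck n S (\<lambda>x. fd f x v + fd g x v)" using Suc.IH[OF Suc.prems(1)] Suc.prems(2,3) by simp
  qed
  moreover have "continuous_on S (\<lambda>x. f x + g x)"
    using Suc.prems by (simp add: continuous_on_add)
  moreover have "x\<in>S \<Longrightarrow> (\<lambda>x. f x + g x) differentiable (at x)" for x using d differentiableI by blast
  ultimately show ?case by auto
qed

lemma Ck_mult: 
  fixes f g :: "'a::real_normed_vector \<Rightarrow> real"
  shows "open S \<Longrightarrow> Ck n S f \<Longrightarrow> Ck n S g \<Longrightarrow> Ck n S (\<lambda>x. f x * g x)"
proof (induction n arbitrary: f g)
  case 0 then show ?case by (simp add: continuous_on_mult)
next
  case (Suc n)
  have d: "x\<in>S \<Longrightarrow> ((\<lambda>x. f x * g x) has_derivative (\<lambda>v. f x * fd g x v + fd f x v * g x)) (at x)" for x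
    using Suc.prems(2,3) by - (rule has_derivative_mult; rule fd_works; auto)
  have "Ck n S (\<lambda>x. fd (\<lambda>x. f x * g x) x v)" for v
  proof (rule Ck_cong[OF Suc.prems(1), of "\<lambda>x. f x * fd g x v + fd f x v * g x"])
    show "x \<in> S \<Longrightarrow> f x * fd g x v + fd f x v * g x = fd (\<lambda>x. f x * g x) x v" for x using fd_eq[OF d, of x] by simp
    have "Ck n S (\<lambda>x. f x * fd g x v)" using Suc.IH[OF Suc.prems(1) Ck_mono[OF Suc.prems(2)]] Suc.prems(3) by auto
    moreover have "Ck n S (\<lambda>x. fd f x v * g x)" using Suc.IH[OF Suc.prems(1) _ Ck_mono[OF Suc.prems(3)]] Suc.prems(2) by auto
    ultimately show "Ck n S (\<lambda>x. f x * fd g x v + fd f x v * g x)" by (rule Ck_add[OF Suc.prems(1)])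
  qed
  moreover have "continuous_on S (\<lambda>x. f x * g x)"
    using Suc.prems by (simp add: continuous_on_mult)
  moreover have "x\<in>S \<Longrightarrow> (\<lambda>x. f x * g x) differentiable (at x)" for x using d differentiableI by blast
  ultimately show ?case by auto
qed

lemma Ck_scaleR: 
  fixes f :: "'a::real_normed_vector \<Rightarrow> real" and g :: "'a \<Rightarrow> 'b::real_normed_vector"
  shows "open S \<Longrightarrow> Ck n S f \<Longrightarrow> Ck n S g \<Longrightarrow> Ck n S (\<lambda>x. f x *\<^sub>R g x)"
proof (induction n arbitrary: f g)
  case 0 then show ?case by (simp add: continuous_on_scaleR)
next
  case (Suc n)
  have d: "x\<in>S \<Longrightarrow> ((\<lambda>x. f x *\<^sub>R g x) has_derivative (\<lambda>v. f x *\<^sub>R fd g x v + fd f x v *\<^sub>R g x)) (at x)" for x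
    using Suc.prems(2,3) by - (rule has_derivative_scaleR; rule fd_works; auto)
  have "Ck n S (\<lambda>x. fd (\<lambda>x. f x *\<^sub>R g x) x v)" for v
  proof (rule Ck_cong[OF Suc.prems(1), of "\<lambda>x. f x *\<^sub>R fd g x v + fd f x v *\<^sub>R g x"])
    show "x \<in> S \<Longrightarrow> f x *\<^sub>R fd g x v + fd f x v *\<^sub>R g x = fd (\<lambda>x. f x *\<^sub>R g x) x v" for x using fd_eq[OF d, of x] by simp
    have "Ck n S (\<lambda>x. f x *\<^sub>R fd g x v)" using Suc.IH[OF Suc.prems(1) Ck_mono[OF Suc.prems(2)]] Suc.prems(3) by auto
    moreover have "Ck n S (\<lambda>x. fd f x v *\<^sub>R g x)" using Suc.IH[OF Suc.prems(1) _ Ck_mono[OF Suc.prems(3)]] Suc.prems(2) by auto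
    ultimately show "Ck n S (\<lambda>x. f x *\<^sub>R fd g x v + fd f x v *\<^sub>R g x)" by (rule Ck_add[OF Suc.prems(1)])
  qed
  moreover have "continuous_on S (\<lambda>x. f x *\<^sub>R g x)"
    using Suc.prems by (simp add: continuous_on_scaleR)
  moreover have "x\<in>S \<Longrightarrow> (\<lambda>x. f x *\<^sub>R g x) differentiable (at x)" for x using d differentiableI by blast
  ultimately show ?case by auto
qed

lemma Ck_inner:
  fixes f g :: "'a::real_normed_vector \<Rightarrow> 'b::real_inner"
  shows "open S \<Longrightarrow> Ck n S f \<Longrightarrow> Ck n S g \<Longrightarrow> Ck n S (\<lambda>x. f x \<bullet> g x)"
proof (induction n arbitrary: f g)
  case 0 then show ?case by (simp add: continuous_on_inner)
next
  case (Suc n)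
  have d: "x\<in>S \<Longrightarrow> ((\<lambda>x. f x \<bullet> g x) has_derivative (\<lambda>v. f x \<bullet> fd g x v + fd f x v \<bullet> g x)) (at x)" for x
    using Suc.prems(2,3) by - (rule has_derivative_inner; rule fd_works; auto)
  have "Ck n S (\<lambda>x. fd (\<lambda>x. f x \<bullet> g x) x v)" for v
  proof (rule Ck_cong[OF Suc.prems(1), of "\<lambda>x. f x \<bullet> fd g x v + fd f x v \<bullet> g x"])
    show "x \<in> S \<Longrightarrow> f x \<bullet> fd g x v + fd f x v \<bullet> g x = fd (\<lambda>x. f x \<bullet> g x) x v" for x using fd_eq[OF d, of x] by simp
    have "Ck n S (\<lambda>x. f x \<bullet> fd g x v)" using Suc.IH[OF Suc.prems(1) Ck_mono[OF Suc.prems(2)]] Suc.prems(3) by auto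
    moreover have "Ck n S (\<lambda>x. fd f x v \<bullet> g x)" using Suc.IH[OF Suc.prems(1) _ Ck_mono[OF Suc.prems(3)]] Suc.prems(2) by auto
    ultimately show "Ck n S (\<lambda>x. f x \<bullet> fd g x v + fd f x v \<bullet> g x)" by (rule Ck_add[OF Suc.prems(1)])
  qed
  moreover have "continuous_on S (\<lambda>x. f x \<bullet> g x)"
    using Suc.prems by (simp add: continuous_on_inner)
  moreover have "x\<in>S \<Longrightarrow> (\<lambda>x. f x \<bullet> g x) differentiable (at x)" for x using d differentiableI by blast
  ultimately show ?case by auto
qed

lemma Ck_diff_fun: "open S \<Longrightarrow> Ck n S f \<Longrightarrow> Ck n S g \<Longrightarrow> Ck n S (\<lambda>x. f x - g x)"
proof -
  assume a: "open S" "Ck n S f" "Ck n S g"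
  have "Ck n S (\<lambda>x. f x + (-1::real) *\<^sub>R g x)"
    by (rule Ck_add[OF a(1,2)], rule Ck_scaleR[OF a(1) Ck_const a(3)])
  then show ?thesis by simp
qed

lemma Ck_sum: assumes "open S" "finite I" "\<And>i. i \<in> I \<Longrightarrow> Ck n S (f i)" shows "Ck n S (\<lambda>x. \<Sum>i\<in>I. f i x)"
  using assms(2,3)
proof (induction I rule: finite_induct)
  case empty then show ?case by (simp add: Ck_const)
next
  case (insert a I) then show ?case by (simp add: Ck_add assms(1))
qed




lemma Ck_comp:
  fixes f :: "'b::euclidean_space \<Rightarrow> real" and m :: "'a::real_normed_vector \<Rightarrow> 'b"
  assumes S: "open S" and T: "open T" and mT: "m ` T \<subseteq> S"
  shows "Ck n S f \<Longrightarrow> Ck n T m \<Longrightarrow> Ck n T (\<lambda>x. f (m x))"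
proof (induction n arbitrary: f)
  case 0 then show ?case using mT by (auto intro: continuous_on_compose2)
next
  case (Suc n)
  have mx: "x \<in> T \<Longrightarrow> m x \<in> S" for x using mT by auto
  have d: "x\<in>T \<Longrightarrow> ((\<lambda>x. f (m x)) has_derivative (\<lambda>v. fd f (m x) (fd m x v))) (at x)" for x
    using diff_chain_at[OF fd_works fd_works, of m x f] Suc.prems mx by (auto simp: o_def)
  have lin: "x \<in> T \<Longrightarrow> fd f (m x) w = (\<Sum>i\<in>Basis. (w \<bullet> i) * fd f (m x) i)" for x w
  proof -
    assume "x \<in> T"
    then have "linear (fd f (m x))" using Suc.prems(1) mx by (auto intro: fd_linear)
    then have "fd f (m x) (\<Sum>i\<in>Basis. (w \<bullet> i) *\<^sub>R i) = (\<Sum>i\<in>Basis. (w \<bullet> i) * fd f (m x) i)"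
      by (simp add: linear_sum linear_scale)
    then show ?thesis by (simp add: euclidean_representation)
  qed
  have "Ck n T (\<lambda>x. fd (\<lambda>x. f (m x)) x v)" for v
  proof (rule Ck_cong[OF T, of "\<lambda>x. \<Sum>i\<in>Basis. (fd m x v \<bullet> i) * fd f (m x) i"])
    show "x \<in> T \<Longrightarrow> (\<Sum>i\<in>Basis. (fd m x v \<bullet> i) * fd f (m x) i) = fd (\<lambda>x. f (m x)) x v" for x
      using fd_eq[OF d, of x] lin[of x "fd m x v"] by simp
    show "Ck n T (\<lambda>x. \<Sum>i\<in>Basis. (fd m x v \<bullet> i) * fd f (m x) i)"
    proof (rule Ck_sum[OF T], simp, rule Ck_mult[OF T])
      fix i :: 'b
      show "Ck n T (\<lambda>x. fd m x v \<bullet> i)"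
        using Ck_blcomp[OF bounded_linear_inner_left T, of n "\<lambda>x. fd m x v" i] Suc.prems(2) by simp
      show "Ck n T (\<lambda>x. fd f (m x) i)"
        using Suc.IH[of "\<lambda>y. fd f y i"] Suc.prems Ck_mono by auto
    qed
  qed
  moreover have "continuous_on T (\<lambda>x. f (m x))"
    using Suc.prems mT by (auto intro: continuous_on_compose2)
  moreover have "x\<in>T \<Longrightarrow> (\<lambda>x. f (m x)) differentiable (at x)" for x using d differentiableI by blast
  ultimately show ?case by auto
qed

lemma Ck_componentwise:
  fixes m :: "'a::real_normed_vector \<Rightarrow> 'b::euclidean_space"
  assumes T: "open T"
  shows "(\<And>i. i\<in>Basis \<Longrightarrow> Ck n T (\<lambda>x. m x \<bullet> i)) \<Longrightarrow> Ck n T m"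
proof (induction n arbitrary: m)
  case 0 then show ?case by (simp add: continuous_on_componentwise[of T m])
next
  case (Suc n)
  define m' where "m' x v = (\<Sum>i\<in>Basis. fd (\<lambda>x. m x \<bullet> i) x v *\<^sub>R i)" for x v
  have d: "(m has_derivative m' x) (at x)" if x: "x \<in> T" for x
  proof -
    have "((\<lambda>x. m x \<bullet> j) has_derivative (\<lambda>v. m' x v \<bullet> j)) (at x)" if j: "j \<in> Basis" for j
    proof -
      have "(\<lambda>v. m' x v \<bullet> j) = fd (\<lambda>x. m x \<bullet> j) x"
        using j by (auto simp: m'_def inner_sum_left inner_Basis if_distrib cong: if_cong)
      then show ?thesis using Suc.prems[OF j] x by (auto intro: fd_works)
    qed
    then show ?thesis by (subst has_derivative_componentwise_within) auto
  qed
  have comp: "x \<in> T \<Longrightarrow> fd m x v \<bullet> i = fd (\<lambda>x. m x \<bullet> i) x v" if "i \<in> Basis" for x v i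
    using fd_eq[OF d, of x] that by (auto simp: m'_def inner_sum_left inner_Basis if_distrib cong: if_cong)
  have "Ck n T (\<lambda>x. fd m x v)" for v
    by (rule Suc.IH, rule Ck_cong[OF T, of "\<lambda>x. fd (\<lambda>x. m x \<bullet> i) x v" for i]) (use comp Suc.prems in auto)
  moreover have "continuous_on T m" using Suc.prems by (simp add: continuous_on_componentwise[of T m])
  moreover have "x\<in>T \<Longrightarrow> m differentiable (at x)" for x using d differentiableI by blast
  ultimately show ?case by auto
qed

lemma Ck_norm_inv:
  fixes S :: "'a::real_inner set"
  assumes "open S" "0 \<notin> S"
  shows "Ck n S norm \<and> Ck n S (\<lambda>y. inverse (norm y))"
proof (induction n)
  case 0
  have "continuous_on S (\<lambda>y. inverse (norm y))"
    by (rule continuous_on_inverse[OF continuous_on_norm_id]) (use assms(2) in auto)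
  then show ?case by (simp add: continuous_on_norm_id)
next
  case (Suc n)
  have nz: "y \<in> S \<Longrightarrow> y \<noteq> 0" for y using assms(2) by auto
  have e1: "(\<lambda>h. h \<bullet> sgn y) = (\<lambda>v. (v \<bullet> y) * inverse (norm y))" for y :: 'a
    by (rule ext) (simp add: sgn_div_norm divide_inverse mult.commute)
  have d1: "y \<in> S \<Longrightarrow> (norm has_derivative (\<lambda>v. (v \<bullet> y) * inverse (norm y))) (at y)" for y
    using has_derivative_norm[of y] nz[of y] unfolding e1 by simp
  have d2: "y \<in> S \<Longrightarrow> ((\<lambda>y. inverse (norm y)) has_derivative
      (\<lambda>v. - (inverse (norm y) * ((v \<bullet> y) * inverse (norm y)) * inverse (norm y)))) (at y)" for y
    by (rule Deriv.has_derivative_inverse[OF _ d1[of y]]) (use nz[of y] in simp_all)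
  have A: "Ck n S (\<lambda>y. (v \<bullet> y) * inverse (norm y))" for v
    by (rule Ck_mult[OF assms(1)], rule Ck_bl, rule bounded_linear_inner_right) (use Suc in simp)
  have B: "Ck n S (\<lambda>y. - (inverse (norm y) * ((v \<bullet> y) * inverse (norm y)) * inverse (norm y)))" for v
  proof -
    have "Ck n S (\<lambda>y. (-1) * ((inverse (norm y) * ((v \<bullet> y) * inverse (norm y))) * inverse (norm y)))"
      apply (rule Ck_mult[OF assms(1) Ck_const])
      apply (rule Ck_mult[OF assms(1)])
       apply (rule Ck_mult[OF assms(1)])
      using Suc A by simp_all
    then show ?thesis by simp
  qed
  have "Ck n S (\<lambda>x. fd norm x v)" for v
    by (rule Ck_cong[OF assms(1) _ A[of v]]) (use fd_eq[OF d1] in simp)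
  moreover have "Ck n S (\<lambda>x. fd (\<lambda>y. inverse (norm y)) x v)" for v
    by (rule Ck_cong[OF assms(1) _ B[of v]]) (use fd_eq[OF d2] in simp)
  moreover have "x\<in>S \<Longrightarrow> norm differentiable (at x)" for x using d1 differentiableI by blast
  moreover have "x\<in>S \<Longrightarrow> (\<lambda>y. inverse (norm y)) differentiable (at x)" for x using d2 differentiableI by blast
  moreover have "continuous_on S norm" "continuous_on S (\<lambda>y. inverse (norm y))" using Suc Ck_cont by blast+
  ultimately show ?case by simp
qed

lemma Ck_sgn:
  fixes S :: "'a::euclidean_space set"
  assumes "open S" "0 \<notin> S"
  shows "Ck n S sgn"
proof (rule Ck_componentwise[OF assms(1)])
  fix i :: 'a assume "i \<in> Basis"
  have "Ck n S (\<lambda>y. (y \<bullet> i) * inverse (norm y))"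
    by (rule Ck_mult[OF assms(1)], rule Ck_bl, rule bounded_linear_inner_left) (use Ck_norm_inv[OF assms] in simp)
  then show "Ck n S (\<lambda>x. sgn x \<bullet> i)"
    by (simp add: sgn_div_norm divide_inverse mult.commute)
qed

lemma Ck_sin_cos:
  fixes l :: "'a::real_normed_vector \<Rightarrow> real"
  assumes l: "bounded_linear l" and S: "open S"
  shows "Ck n S (\<lambda>x. sin (l x)) \<and> Ck n S (\<lambda>x. cos (l x))"
proof (induction n)
  case 0 then show ?case using l by (simp add: continuous_on_sin continuous_on_cos linear_continuous_on)
next
  case (Suc n)
  have d1: "((\<lambda>x. sin (l x)) has_derivative (\<lambda>v. cos (l x) * l v)) (at x)" for x
    using has_derivative_sin[OF bounded_linear_imp_has_derivative[OF l]] by (simp add: mult.commute)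
  have d2: "((\<lambda>x. cos (l x)) has_derivative (\<lambda>v. (- sin (l x)) * l v)) (at x)" for x
    using has_derivative_cos[OF bounded_linear_imp_has_derivative[OF l]] by (simp add: mult.commute)
  have "Ck n S (\<lambda>x. fd (\<lambda>x. sin (l x)) x v)" for v
    unfolding fd_eq[OF d1] by (rule Ck_mult[OF S]) (use Suc Ck_const in auto)
  moreover have "Ck n S (\<lambda>x. fd (\<lambda>x. cos (l x)) x v)" for v
  proof -
    have "Ck n S (\<lambda>x. ((-1) * sin (l x)) * l v)"
      by (intro Ck_mult[OF S] Ck_const) (use Suc in auto)
    then show ?thesis unfolding fd_eq[OF d2] by simp
  qed
  moreover have "continuous_on S (\<lambda>x. sin (l x))" "continuous_on S (\<lambda>x. cos (l x))"
    using l by (simp_all add: continuous_on_sin continuous_on_cos linear_continuous_on)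
  moreover have "(\<lambda>x. sin (l x)) differentiable (at x)" "(\<lambda>x. cos (l x)) differentiable (at x)" for x
    using d1 d2 differentiableI by blast+
  ultimately show ?case by simp
qed

lemma Cinf_intro: "(\<And>n. Ck n S f) \<Longrightarrow> Cinf_on S f" by (simp add: Cinf_on_def)




definition dT :: "(real \<times> real \<Rightarrow> real) \<Rightarrow> real \<times> real \<Rightarrow> real" where
  "dT f q = fd f q (1,0)"
definition dP :: "(real \<times> real \<Rightarrow> real) \<Rightarrow> real \<times> real \<Rightarrow> real" where
  "dP f q = fd f q (0,1)"

lemma Ck_dT: "Ck (Suc n) Q f \<Longrightarrow> Ck n Q (dT f)"
  unfolding dT_def by auto
lemma Ck_dP: "Ck (Suc n) Q f \<Longrightarrow> Ck n Q (dP f)"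
  unfolding dP_def by auto
lemma Cinf_dT: "Cinf_on Q f \<Longrightarrow> Cinf_on Q (dT f)"
  unfolding dT_def by (rule Cinf_D)
lemma Cinf_dP: "Cinf_on Q f \<Longrightarrow> Cinf_on Q (dP f)"
  unfolding dP_def by (rule Cinf_D)

lemma fd2_decomp:
  assumes "f differentiable (at q)"
  shows "fd f q (a, b) = a * dT f q + b * dP f q"
proof -
  have l: "linear (fd f q)" using assms by (rule fd_linear)
  have e: "(a, b) = a *\<^sub>R (1::real, 0::real) + b *\<^sub>R (0, 1)" by simp
  have "fd f q (a *\<^sub>R (1::real, 0::real) + b *\<^sub>R (0, 1)) = a * fd f q (1, 0) + b * fd f q (0, 1)"
    by (simp only: linear_add[OF l] linear_scale[OF l] real_scaleR_def)
  then show ?thesis unfolding dT_def dP_def by (subst e)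
qed

lemma deriv_T:
  assumes "f differentiable (at (t, y))"
  shows "((\<lambda>t. f (t, y)) has_real_derivative dT f (t, y)) (at t)"
proof -
  have "((\<lambda>t. (t, y)) has_derivative (\<lambda>h. (h, 0))) (at t)"
    by (auto intro!: derivative_eq_intros)
  from diff_chain_at[OF this fd_works[OF assms]]
  have "((\<lambda>t. f (t, y)) has_derivative (\<lambda>h. fd f (t, y) (h, 0))) (at t)" by (simp add: o_def)
  moreover have "(\<lambda>h. fd f (t, y) (h, 0)) = (\<lambda>h. dT f (t, y) * h)"
    using fd2_decomp[OF assms] by (auto simp: mult.commute)
  ultimately show ?thesis by (simp add: has_field_derivative_def)
qed

lemma deriv_P:
  assumes "f differentiable (at (t, y))"
  shows "((\<lambda>y. f (t, y)) has_real_derivative dP f (t, y)) (at y)"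
proof -
  have "((\<lambda>y. (t, y)) has_derivative (\<lambda>h. (0, h))) (at y)"
    by (auto intro!: derivative_eq_intros)
  from diff_chain_at[OF this fd_works[OF assms]]
  have "((\<lambda>y. f (t, y)) has_derivative (\<lambda>h. fd f (t, y) (0, h))) (at y)" by (simp add: o_def)
  moreover have "(\<lambda>h. fd f (t, y) (0, h)) = (\<lambda>h. dP f (t, y) * h)"
    using fd2_decomp[OF assms] by (auto simp: mult.commute)
  ultimately show ?thesis by (simp add: has_field_derivative_def)
qed

lemma schwarz:
  assumes Q: "open Q" and f: "Ck 2 Q f" and q: "q \<in> Q"
  shows "dP (dT f) q = dT (dP f) q"
proof (rule ccontr)
  assume ne: "dP (dT f) q \<noteq> dT (dP f) q"
  define d where "d = \<bar>dP (dT f) q - dT (dP f) q\<bar>"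
  have d: "d > 0" using ne by (simp add: d_def)
  have f2: "Ck (Suc (Suc 0)) Q f" using f by (simp only: numeral_2_eq_2)
  have f1: "Ck (Suc 0) Q (dT f)" "Ck (Suc 0) Q (dP f)" by (rule Ck_dT[OF f2], rule Ck_dP[OF f2])
  have c12: "continuous_on Q (dP (dT f))" and c21: "continuous_on Q (dT (dP f))"
    using Ck_cont[OF Ck_dP[OF f1(1)]] Ck_cont[OF Ck_dT[OF f1(2)]] by auto
  have diff0: "z \<in> Q \<Longrightarrow> f differentiable (at z)" for z using Ck_diff[OF f2] by blast
  have diff1: "z \<in> Q \<Longrightarrow> dT f differentiable (at z)" "z \<in> Q \<Longrightarrow> dP f differentiable (at z)" for z
    using Ck_diff[OF f1(1)] Ck_diff[OF f1(2)] by blast+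
  obtain e1 where e1: "e1 > 0" "\<And>z. z \<in> Q \<Longrightarrow> dist z q < e1 \<Longrightarrow> dist (dP (dT f) z) (dP (dT f) q) < d/2"
    using c12 q d unfolding continuous_on_iff by (metis half_gt_zero)
  obtain e2 where e2: "e2 > 0" "\<And>z. z \<in> Q \<Longrightarrow> dist z q < e2 \<Longrightarrow> dist (dT (dP f) z) (dT (dP f) q) < d/2"
    using c21 q d unfolding continuous_on_iff by (metis half_gt_zero)
  obtain e3 where e3: "e3 > 0" "ball q e3 \<subseteq> Q" using Q q open_contains_ball by blast
  define e where "e = min e1 (min e2 e3)"
  have e: "e > 0" using e1 e2 e3 by (simp add: e_def)
  obtain x y where qxy: "q = (x, y)" by (cases q)
  define h where "h = e / 2"
  have h: "h > 0" using e by (simp add: h_def)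
  have inbox: "dist (a, b) q < e" if "x \<le> a" "a \<le> x + h" "y \<le> b" "b \<le> y + h" for a b
  proof -
    have "dist (a, b) q = sqrt ((a - x)^2 + (b - y)^2)"
      by (simp add: qxy dist_Pair_Pair dist_real_def)
    also have "\<dots> \<le> sqrt (h^2 + h^2)"
      using that by (intro real_sqrt_le_mono add_mono power_mono) auto
    also have "\<dots> < e"
    proof -
      have "h^2 + h^2 < e^2" using e by (simp add: h_def power2_eq_square field_simps)
      then show ?thesis using e by (metis real_less_lsqrt less_eq_real_def add_nonneg_nonneg zero_le_power2)
    qed
    finally show ?thesis .
  qed
  have inO: "(a, b) \<in> Q" if "x \<le> a" "a \<le> x + h" "y \<le> b" "b \<le> y + h" for a b
    using inbox[OF that] e3 by (auto simp: e_def dist_commute)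
  define D where "D = f (x + h, y + h) - f (x + h, y) - f (x, y + h) + f (x, y)"
  
  have hy: "y \<le> y + h" "x \<le> x + h" using h by auto
  have dA: "DERIV (\<lambda>t. f (t, y + h) - f (t, y)) t :> dT f (t, y + h) - dT f (t, y)"
    if "x \<le> t" "t \<le> x + h" for t
    by (intro DERIV_diff deriv_T diff0 inO; (rule that | rule hy | rule order_refl))
  obtain \<xi> where \<xi>: "x < \<xi>" "\<xi> < x + h"
    "(f (x + h, y + h) - f (x + h, y)) - (f (x, y + h) - f (x, y)) = h * (dT f (\<xi>, y + h) - dT f (\<xi>, y))"
    using MVT2[of x "x + h" "\<lambda>t. f (t, y + h) - f (t, y)" "\<lambda>t. dT f (t, y + h) - dT f (t, y)", OF _ dA] h
    by auto
  have dB: "DERIV (\<lambda>t. dT f (\<xi>, t)) t :> dP (dT f) (\<xi>, t)" if "y \<le> t" "t \<le> y + h" for t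
    by (intro deriv_P diff1 inO; (rule that | rule hy | rule order_refl | use \<xi> in linarith))
  obtain \<eta> where \<eta>: "y < \<eta>" "\<eta> < y + h"
    "dT f (\<xi>, y + h) - dT f (\<xi>, y) = h * dP (dT f) (\<xi>, \<eta>)"
    using MVT2[of y "y + h" "\<lambda>t. dT f (\<xi>, t)" "\<lambda>t. dP (dT f) (\<xi>, t)", OF _ dB] h
    by auto
  have dC: "DERIV (\<lambda>t. f (x + h, t) - f (x, t)) t :> dP f (x + h, t) - dP f (x, t)"
    if "y \<le> t" "t \<le> y + h" for t
    by (intro DERIV_diff deriv_P diff0 inO; (rule that | rule hy | rule order_refl))
  obtain \<eta>' where \<eta>': "y < \<eta>'" "\<eta>' < y + h"
    "(f (x + h, y + h) - f (x, y + h)) - (f (x + h, y) - f (x, y)) = h * (dP f (x + h, \<eta>') - dP f (x, \<eta>'))"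
    using MVT2[of y "y + h" "\<lambda>t. f (x + h, t) - f (x, t)" "\<lambda>t. dP f (x + h, t) - dP f (x, t)", OF _ dC] h
    by auto
  have dD: "DERIV (\<lambda>t. dP f (t, \<eta>')) t :> dT (dP f) (t, \<eta>')" if "x \<le> t" "t \<le> x + h" for t
    by (intro deriv_T diff1 inO; (rule that | rule hy | rule order_refl | use \<eta>' in linarith))
  obtain \<xi>' where \<xi>': "x < \<xi>'" "\<xi>' < x + h"
    "dP f (x + h, \<eta>') - dP f (x, \<eta>') = h * dT (dP f) (\<xi>', \<eta>')"
    using MVT2[of x "x + h" "\<lambda>t. dP f (t, \<eta>')" "\<lambda>t. dT (dP f) (t, \<eta>')", OF _ dD] h
    by auto
  have "h * (h * dP (dT f) (\<xi>, \<eta>)) = h * (h * dT (dP f) (\<xi>', \<eta>'))"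
    using \<xi>(3) \<eta>(3) \<eta>'(3) \<xi>'(3) by (simp add: algebra_simps)
  then have eq: "dP (dT f) (\<xi>, \<eta>) = dT (dP f) (\<xi>', \<eta>')" using h by simp
  have p1: "dist (\<xi>, \<eta>) q < e" "dist (\<xi>', \<eta>') q < e"
    using inbox[of \<xi> \<eta>] inbox[of \<xi>' \<eta>'] \<xi> \<eta> \<xi>' \<eta>' by auto
  have p2: "(\<xi>, \<eta>) \<in> Q" "(\<xi>', \<eta>') \<in> Q"
    using inO[of \<xi> \<eta>] inO[of \<xi>' \<eta>'] \<xi> \<eta> \<xi>' \<eta>' by auto
  have "\<bar>dP (dT f) (\<xi>, \<eta>) - dP (dT f) q\<bar> < d/2"
    using e1(2)[OF p2(1)] p1 by (auto simp: e_def dist_real_def)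
  moreover have "\<bar>dT (dP f) (\<xi>', \<eta>') - dT (dP f) q\<bar> < d/2"
    using e2(2)[OF p2(2)] p1 by (auto simp: e_def dist_real_def)
  ultimately show False using eq d_def by linarith
qed



definition eT :: "real \<times> real \<Rightarrow> real^3" where
  "eT q = vector [cos (fst q) * cos (snd q), cos (fst q) * sin (snd q), - sin (fst q)]"
definition eP :: "real \<times> real \<Rightarrow> real^3" where
  "eP q = vector [- sin (snd q), cos (snd q), 0]"

lemma vec3_eq: "(x::real^3) = y \<longleftrightarrow> x$1 = y$1 \<and> x$2 = y$2 \<and> x$3 = y$3"
  by (simp add: vec_eq_iff forall_3)

lemma inner3: "(x::real^3) \<bullet> y = x$1 * y$1 + x$2 * y$2 + x$3 * y$3"
  by (simp add: inner_vec_def sum_3)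

lemma vector3_axis: "(vector [a, b, c] :: real^3) = a *\<^sub>R axis 1 1 + b *\<^sub>R axis 2 1 + c *\<^sub>R axis 3 1"
  by (simp add: vec3_eq axis_def)

lemma hdv3:
  assumes "(f1 has_derivative f1') F" "(f2 has_derivative f2') F" "(f3 has_derivative f3') F"
  shows "((\<lambda>x. vector [f1 x, f2 x, f3 x] :: real^3) has_derivative (\<lambda>h. vector [f1' h, f2' h, f3' h])) F"
  unfolding vector3_axis
  by (intro has_derivative_add has_derivative_scaleR_left assms)

lemma sp_comp [simp]:
  "sph_par q $ 1 = sin (fst q) * cos (snd q)"
  "sph_par q $ 2 = sin (fst q) * sin (snd q)"
  "sph_par q $ 3 = cos (fst q)"
  by (simp_all add: sph_par_def)

lemma eT_comp [simp]:
  "eT q $ 1 = cos (fst q) * cos (snd q)"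
  "eT q $ 2 = cos (fst q) * sin (snd q)"
  "eT q $ 3 = - sin (fst q)"
  by (simp_all add: eT_def)

lemma eP_comp [simp]:
  "eP q $ 1 = - sin (snd q)"
  "eP q $ 2 = cos (snd q)"
  "eP q $ 3 = 0"
  by (simp_all add: eP_def)

lemma sc1: "sin x * sin x + cos x * cos x = (1::real)"
  by (metis power2_eq_square sin_cos_squared_add)

lemma frame_inner [simp]:
  "sph_par q \<bullet> sph_par q = 1" "eT q \<bullet> eT q = 1" "eP q \<bullet> eP q = 1"
  "sph_par q \<bullet> eT q = 0" "eT q \<bullet> sph_par q = 0"
  "sph_par q \<bullet> eP q = 0" "eP q \<bullet> sph_par q = 0"
  "eT q \<bullet> eP q = 0" "eP q \<bullet> eT q = 0"
proof -
  obtain t y where q: "q = (t, y)" by (cases q)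
  have a: "sin t * sin t + cos t * cos t = 1" "sin y * sin y + cos y * cos y = 1" by (rule sc1)+
  have p1: "\<And>st ct sy cy::real. st * st + ct * ct = 1 \<Longrightarrow> sy * sy + cy * cy=1 \<Longrightarrow> st * cy * (st * cy) + st * sy * (st * sy) + ct * ct = 1"
    by algebra
  have p2: "\<And>st ct sy cy::real. st * st + ct * ct = 1 \<Longrightarrow> sy * sy + cy * cy=1 \<Longrightarrow> ct * cy * (ct * cy) + ct * sy * (ct * sy) + - st * - st = 1"
    by algebra
  have p3: "\<And>st ct sy cy::real. st * cy * (ct * cy) + st * sy * (ct * sy) + ct * - st = st * ct * (sy * sy + cy * cy - 1)"
    by algebra
  show "sph_par q \<bullet> sph_par q = 1" unfolding inner3 q using p1[OF a] by simp
  show "eT q \<bullet> eT q = 1" unfolding inner3 q using p2[OF a] by simp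
  show "eP q \<bullet> eP q = 1" unfolding inner3 q using a(2) by (simp add: algebra_simps)
  show "sph_par q \<bullet> eT q = 0" unfolding inner3 q using p3[of "sin t" "cos y" "cos t" "sin y"] a(2) by simp
  show "eT q \<bullet> sph_par q = 0" unfolding inner3 q using p3[of "sin t" "cos y" "cos t" "sin y"] a(2) by (simp add: mult.commute)
  show "sph_par q \<bullet> eP q = 0" "eP q \<bullet> sph_par q = 0" unfolding inner3 q by (simp_all add: algebra_simps)
  show "eT q \<bullet> eP q = 0" "eP q \<bullet> eT q = 0" unfolding inner3 q by (simp_all add: algebra_simps)
qed

lemma norm_sp [simp]: "norm (sph_par q) = 1"
  by (simp add: norm_eq_sqrt_inner)

lemma sp_nz [simp]: "sph_par q \<noteq> 0"
  using norm_sp[of q] by (metis norm_zero zero_neq_one)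

lemma sp_sphere [simp]: "sph_par q \<in> sphere 0 1"
  by simp

lemma expand3: "v = (v \<bullet> sph_par q) *\<^sub>R sph_par q + (v \<bullet> eT q) *\<^sub>R eT q + (v \<bullet> eP q) *\<^sub>R eP q"
proof -
  obtain t y where q: "q = (t, y)" by (cases q)
  have a: "sin t * sin t + cos t * cos t = 1" "sin y * sin y + cos y * cos y = 1" by (rule sc1)+
  have g: "\<And>st ct sy cy v1 v2 v3::real. st * st + ct * ct = 1 \<Longrightarrow> sy * sy + cy * cy=1 \<Longrightarrow>
     v1 = (v1 * (st * cy) + v2 * (st * sy) + v3 * ct) * (st * cy) + (v1 * (ct * cy) + v2 * (ct * sy) + v3 * - st) * (ct * cy) + (v1 * - sy + v2 * cy) * - sy
   \<and> v2 = (v1 * (st * cy) + v2 * (st * sy) + v3 * ct) * (st * sy) + (v1 * (ct * cy) + v2 * (ct * sy) + v3 * - st) * (ct * sy) + (v1 * - sy + v2 * cy) * cy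
   \<and> v3 = (v1 * (st * cy) + v2 * (st * sy) + v3 * ct) * ct + (v1 * (ct * cy) + v2 * (ct * sy) + v3 * - st) * - st"
    by algebra
  show ?thesis unfolding vec3_eq inner3 q using g[OF a, of "v$1" "v$2" "v$3"] by simp
qed


lemma sp_vec: "sph_par q = vector [sin (fst q) * cos (snd q), sin (fst q) * sin (snd q), cos (fst q)]"
  by (simp add: sph_par_def)

lemma d_trig:
  fixes q :: "real \<times> real"
  shows "((\<lambda>x. sin (fst x)) has_derivative (\<lambda>h. fst h * cos (fst q))) (at q)"
  "((\<lambda>x. cos (fst x)) has_derivative (\<lambda>h. fst h * - sin (fst q))) (at q)"
  "((\<lambda>x. sin (snd x)) has_derivative (\<lambda>h. snd h * cos (snd q))) (at q)"
  "((\<lambda>x. cos (snd x)) has_derivative (\<lambda>h. snd h * - sin (snd q))) (at q)"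
proof -
  have fs: "((\<lambda>x. fst x) has_derivative fst) (at q)" "((\<lambda>x. snd x) has_derivative snd) (at q)"
    by (simp_all add: bounded_linear_imp_has_derivative bounded_linear_fst bounded_linear_snd)
  show "((\<lambda>x. sin (fst x)) has_derivative (\<lambda>h. fst h * cos (fst q))) (at q)"
    by (rule has_derivative_sin[OF bounded_linear_imp_has_derivative[OF bounded_linear_fst]])
  show "((\<lambda>x. cos (fst x)) has_derivative (\<lambda>h. fst h * - sin (fst q))) (at q)"
    by (rule has_derivative_cos[OF bounded_linear_imp_has_derivative[OF bounded_linear_fst]])
  show "((\<lambda>x. sin (snd x)) has_derivative (\<lambda>h. snd h * cos (snd q))) (at q)"
    by (rule has_derivative_sin[OF bounded_linear_imp_has_derivative[OF bounded_linear_snd]])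
  show "((\<lambda>x. cos (snd x)) has_derivative (\<lambda>h. snd h * - sin (snd q))) (at q)"
    by (rule has_derivative_cos[OF bounded_linear_imp_has_derivative[OF bounded_linear_snd]])
qed

lemma hd_sp: "(sph_par has_derivative (\<lambda>d. fst d *\<^sub>R eT q + (snd d * sin (fst q)) *\<^sub>R eP q)) (at q)"
proof -
  have "((\<lambda>q. vector [sin (fst q) * cos (snd q), sin (fst q) * sin (snd q), cos (fst q)] :: real^3) has_derivative
     (\<lambda>d. vector [sin (fst q) * (snd d * - sin (snd q)) + fst d * cos (fst q) * cos (snd q),
                   sin (fst q) * (snd d * cos (snd q)) + fst d * cos (fst q) * sin (snd q),
                   fst d * - sin (fst q)])) (at q)"
    by (intro hdv3 has_derivative_mult d_trig)
  moreover have "(\<lambda>d. vector [sin (fst q) * (snd d * - sin (snd q)) + fst d * cos (fst q) * cos (snd q),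
                   sin (fst q) * (snd d * cos (snd q)) + fst d * cos (fst q) * sin (snd q),
                   fst d * - sin (fst q)] :: real^3) = (\<lambda>d. fst d *\<^sub>R eT q + (snd d * sin (fst q)) *\<^sub>R eP q)"
    by (rule ext) (simp add: vec3_eq algebra_simps)
  ultimately show ?thesis unfolding sp_vec[abs_def] by simp
qed

lemma eT_vec: "eT q = vector [cos (fst q) * cos (snd q), cos (fst q) * sin (snd q), - sin (fst q)]"
  by (simp add: eT_def)

lemma hd_eT: "(eT has_derivative (\<lambda>d. fst d *\<^sub>R (- sph_par q) + (snd d * cos (fst q)) *\<^sub>R eP q)) (at q)"
proof -
  have "((\<lambda>q. vector [cos (fst q) * cos (snd q), cos (fst q) * sin (snd q), - sin (fst q)] :: real^3) has_derivative
     (\<lambda>d. vector [cos (fst q) * (snd d * - sin (snd q)) + fst d * - sin (fst q) * cos (snd q),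
                   cos (fst q) * (snd d * cos (snd q)) + fst d * - sin (fst q) * sin (snd q),
                   - (fst d * cos (fst q))])) (at q)"
    by (intro hdv3 has_derivative_mult has_derivative_minus d_trig)
  moreover have "(\<lambda>d. vector [cos (fst q) * (snd d * - sin (snd q)) + fst d * - sin (fst q) * cos (snd q),
                   cos (fst q) * (snd d * cos (snd q)) + fst d * - sin (fst q) * sin (snd q),
                   - (fst d * cos (fst q))] :: real^3) = (\<lambda>d. fst d *\<^sub>R (- sph_par q) + (snd d * cos (fst q)) *\<^sub>R eP q)"
    by (rule ext) (simp add: vec3_eq algebra_simps)
  ultimately show ?thesis unfolding eT_vec[abs_def] by simp
qed

lemma eP_vec: "eP q = vector [- sin (snd q), cos (snd q), 0]"
  by (simp add: eP_def)

lemma hd_eP: "(eP has_derivative (\<lambda>d. (- snd d) *\<^sub>R (sin (fst q) *\<^sub>R sph_par q + cos (fst q) *\<^sub>R eT q))) (at q)"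
proof -
  have h1: "((\<lambda>q. vector [- sin (snd q), cos (snd q), 0] :: real^3) has_derivative
     (\<lambda>d. vector [- (snd d * cos (snd q)), snd d * - sin (snd q), 0])) (at q)"
    by (intro hdv3 has_derivative_minus has_derivative_const d_trig)
  have h2: "(\<lambda>d. vector [- (snd d * cos (snd q)), snd d * - sin (snd q), 0] :: real^3)
      = (\<lambda>d. (- snd d) *\<^sub>R (sin (fst q) *\<^sub>R sph_par q + cos (fst q) *\<^sub>R eT q))"
  proof -
    have a: "sin (fst q) * sin (fst q) + cos (fst q) * cos (fst q) = 1" by (rule sc1)
    have g: "\<And>st ct x::real. st * st + ct * ct = 1 \<Longrightarrow> - x = - (st * (st * x)) - ct * (ct * x)" by algebra
    have "(vector [- (snd d * cos (snd q)), snd d * - sin (snd q), 0] :: real^3)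
      = (- snd d) *\<^sub>R (sin (fst q) *\<^sub>R sph_par q + cos (fst q) *\<^sub>R eT q)" for d
      unfolding vec3_eq using g[OF a, of "cos (snd q) * snd d"] g[OF a, of "sin (snd q) * snd d"]
      by (simp add: algebra_simps)
    then show ?thesis by (rule ext)
  qed
  show ?thesis unfolding eP_vec[abs_def] using h1 unfolding h2 .
qed

lemma Basis_real3: "i \<in> (Basis :: (real^3) set) \<Longrightarrow> i = axis 1 1 \<or> i = axis 2 1 \<or> i = axis 3 1"
  by (auto simp: Basis_vec_def) (metis exhaust_3)

lemma Ck_vec3:
  fixes m :: "'a::real_normed_vector \<Rightarrow> real^3"
  assumes "open T" "Ck n T (\<lambda>x. m x $ 1)" "Ck n T (\<lambda>x. m x $ 2)" "Ck n T (\<lambda>x. m x $ 3)"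
  shows "Ck n T m"
proof (rule Ck_componentwise[OF assms(1)])
  fix i :: "real^3" assume "i \<in> Basis"
  have e: "(\<lambda>x. m x \<bullet> axis k 1) = (\<lambda>x. m x $ k)" for k by (simp add: cart_eq_inner_axis)
  from Basis_real3[OF \<open>i \<in> Basis\<close>] show "Ck n T (\<lambda>x. m x \<bullet> i)"
  proof (elim disjE)
    assume "i = axis 1 1" then show ?thesis using assms(2) e[of 1] by simp
  next
    assume "i = axis 2 1" then show ?thesis using assms(3) e[of 2] by simp
  next
    assume "i = axis 3 1" then show ?thesis using assms(4) e[of 3] by simp
  qed
qed

lemma Ck_trig:
  fixes S :: "(real \<times> real) set"
  assumes "open S"
  shows "Ck n S (\<lambda>q. sin (fst q))" "Ck n S (\<lambda>q. cos (fst q))" "Ck n S (\<lambda>q. sin (snd q))" "Ck n S (\<lambda>q. cos (snd q))"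
  using Ck_sin_cos[OF bounded_linear_fst assms] Ck_sin_cos[OF bounded_linear_snd assms] by auto

lemma Ck_sp: "open S \<Longrightarrow> Ck n S sph_par"
  by (rule Ck_vec3) (auto intro!: Ck_mult Ck_trig)

lemma Ck_eT: "open S \<Longrightarrow> Ck n S eT"
proof (rule Ck_vec3)
  assume S: "open S"
  have "Ck n S (\<lambda>q. (-1) * sin (fst q))" by (intro Ck_mult Ck_trig Ck_const S)
  then show "Ck n S (\<lambda>x. eT x $ 3)" by simp
qed (auto intro!: Ck_mult Ck_trig)

lemma Ck_eP: "open S \<Longrightarrow> Ck n S eP"
proof (rule Ck_vec3)
  assume S: "open S"
  have "Ck n S (\<lambda>q. (-1) * sin (snd q))" by (intro Ck_mult Ck_trig Ck_const S)
  then show "Ck n S (\<lambda>x. eP x $ 1)" by simp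
qed (auto intro!: Ck_mult Ck_trig Ck_const)

lemma cont_sp: "continuous_on S sph_par" using Ck_cont[OF Ck_sp[OF open_UNIV]] continuous_on_subset by blast
lemma cont_eT: "continuous_on S eT" using Ck_cont[OF Ck_eT[OF open_UNIV]] continuous_on_subset by blast
lemma cont_eP: "continuous_on S eP" using Ck_cont[OF Ck_eP[OF open_UNIV]] continuous_on_subset by blast



lemma tproj_frame: "tproj (sph_par q) b = (b \<bullet> eT q) *\<^sub>R eT q + (b \<bullet> eP q) *\<^sub>R eP q"
proof -
  have E: "b = (b \<bullet> sph_par q) *\<^sub>R sph_par q + (b \<bullet> eT q) *\<^sub>R eT q + (b \<bullet> eP q) *\<^sub>R eP q" by (rule expand3)
  have "b - (b \<bullet> sph_par q) *\<^sub>R sph_par q = ((b \<bullet> sph_par q) *\<^sub>R sph_par q + (b \<bullet> eT q) *\<^sub>R eT q + (b \<bullet> eP q) *\<^sub>R eP q) - (b \<bullet> sph_par q) *\<^sub>R sph_par q"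
    using E by (rule arg_cong[where f="\<lambda>z. z - (b \<bullet> sph_par q) *\<^sub>R sph_par q"])
  then show ?thesis unfolding tproj_def by (simp add: algebra_simps)
qed

lemma sum_AA: "(\<Sum>b\<in>Basis. (b \<bullet> u) * (b \<bullet> (v::real^3))) = u \<bullet> v"
  by (simp add: euclidean_inner[of u v] inner_commute mult.commute)

lemma frame_sum:
  fixes B :: "real^3 \<Rightarrow> real^3 \<Rightarrow> real"
  assumes B: "bilinear B"
  shows "(\<Sum>b\<in>Basis. B (tproj (sph_par q) b) (tproj (sph_par q) b)) = B (eT q) (eT q) + B (eP q) (eP q)"
proof -
  define T where "T = eT q" define P where "P = eP q"
  have e: "B (tproj (sph_par q) b) (tproj (sph_par q) b) =
     ((b \<bullet> T) * (b \<bullet> T)) * B T T + ((b \<bullet> T) * (b \<bullet> P)) * (B T P + B P T) + ((b \<bullet> P) * (b \<bullet> P)) * B P P" for b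
    unfolding tproj_frame T_def[symmetric] P_def[symmetric]
    by (simp add: bilinear_ladd[OF B] bilinear_radd[OF B] bilinear_lmul[OF B] bilinear_rmul[OF B] algebra_simps)
  have "(\<Sum>b\<in>Basis. B (tproj (sph_par q) b) (tproj (sph_par q) b)) =
     (\<Sum>b\<in>Basis. (b \<bullet> T) * (b \<bullet> T)) * B T T + (\<Sum>b\<in>Basis. (b \<bullet> T) * (b \<bullet> P)) * (B T P + B P T)
     + (\<Sum>b\<in>Basis. (b \<bullet> P) * (b \<bullet> P)) * B P P"
    unfolding e by (simp add: sum.distrib sum_distrib_right)
  also have "\<dots> = B T T + B P P" unfolding sum_AA by (simp add: T_def P_def)
  finally show ?thesis by (simp add: T_def P_def)
qed

lemma bilinear_prod:
  fixes f g :: "'a::real_vector \<Rightarrow> real"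
  assumes "linear f" "linear g"
  shows "bilinear (\<lambda>v w. f v * g w)"
  unfolding bilinear_def using assms
  by (auto intro!: linearI simp: linear_add linear_scale algebra_simps)

lemma frame_sum2:
  fixes H K :: "real^3 \<Rightarrow> real^3 \<Rightarrow> real"
  assumes H: "bilinear H" and K: "bilinear K"
  shows "(\<Sum>b\<in>Basis. \<Sum>c\<in>Basis. H (tproj (sph_par q) b) (tproj (sph_par q) c) * K (tproj (sph_par q) b) (tproj (sph_par q) c))
   = H (eT q) (eT q) * K (eT q) (eT q) + H (eT q) (eP q) * K (eT q) (eP q)
   + H (eP q) (eT q) * K (eP q) (eT q) + H (eP q) (eP q) * K (eP q) (eP q)"
proof -
  have lin: "linear (\<lambda>w. B v w)" "linear (\<lambda>v. B v w)" if "bilinear B" for B :: "real^3 \<Rightarrow> real^3 \<Rightarrow> real" and v w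
    using that unfolding bilinear_def by auto
  have inner: "(\<Sum>c\<in>Basis. H v (tproj (sph_par q) c) * K v (tproj (sph_par q) c))
     = H v (eT q) * K v (eT q) + H v (eP q) * K v (eP q)" for v
    by (rule frame_sum[OF bilinear_prod[OF lin(1)[OF H] lin(1)[OF K]]])
  have o1: "(\<Sum>b\<in>Basis. H (tproj (sph_par q) b) w * K (tproj (sph_par q) b) w)
     = H (eT q) w * K (eT q) w + H (eP q) w * K (eP q) w" for w
    by (rule frame_sum[OF bilinear_prod[OF lin(2)[OF H] lin(2)[OF K]]])
  show ?thesis unfolding inner by (simp add: sum.distrib o1)
qed

lemma bilinear_innerD:
  assumes "linear L"
  shows "bilinear (\<lambda>v w. L v \<bullet> (w::'a::real_inner))"
  unfolding bilinear_def using assms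
  by (auto intro!: linearI simp: linear_add linear_scale inner_add_left inner_add_right)

lemma bilinear_inner3: "bilinear (\<lambda>v w. (v::real^3) \<bullet> w)"
  unfolding bilinear_def by (auto intro!: linearI simp: inner_add_left inner_add_right)



lemma fd_expand:
  fixes f :: "'a::euclidean_space \<Rightarrow> real"
  assumes "f differentiable (at x)"
  shows "fd f x v = (\<Sum>i\<in>Basis. (v \<bullet> i) * fd f x i)"
proof -
  have l: "linear (fd f x)" using assms by (rule fd_linear)
  have "fd f x v = fd f x (\<Sum>i\<in>Basis. (v \<bullet> i) *\<^sub>R i)" by (simp add: euclidean_representation)
  also have "\<dots> = (\<Sum>i\<in>Basis. (v \<bullet> i) * fd f x i)" by (simp add: linear_sum[OF l] linear_scale[OF l])
  finally show ?thesis .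
qed

lemma Ck2_D: "Ck 2 S F \<Longrightarrow> Ck 1 S (\<lambda>y. fd F y v)"
  by (simp add: numeral_2_eq_2)

lemma Ck2_diff: "Ck 2 S F \<Longrightarrow> x \<in> S \<Longrightarrow> F differentiable (at x)"
  by (simp add: numeral_2_eq_2)

lemma Ck2_diff1: "Ck 2 S F \<Longrightarrow> x \<in> S \<Longrightarrow> (\<lambda>y. fd F y v) differentiable (at x)"
  by (simp add: numeral_2_eq_2)

lemma D2_fd: "D2 F x v = fd (\<lambda>y. fd F y v) x"
  by (rule ext) (simp add: D2_def)

lemma hd_D2:
  assumes "Ck 2 S F" "x \<in> S"
  shows "((\<lambda>y. fd F y v) has_derivative D2 F x v) (at x)"
  unfolding D2_fd using Ck2_diff1[OF assms] by (rule fd_works)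

lemma D2_lin1:
  fixes F :: "'a::euclidean_space \<Rightarrow> real"
  assumes S: "open S" and F: "Ck 2 S F" and x: "x \<in> S"
  shows "D2 F x v w = (\<Sum>i\<in>Basis. (v \<bullet> i) * D2 F x i w)"
proof -
  have eq: "y \<in> S \<Longrightarrow> (\<Sum>i\<in>Basis. (v \<bullet> i) * fd F y i) = fd F y v" for y
    using fd_expand[OF Ck2_diff[OF F], of y v] by simp
  have hd: "((\<lambda>y. \<Sum>i\<in>Basis. (v \<bullet> i) * fd F y i) has_derivative (\<lambda>w. \<Sum>i\<in>Basis. (v \<bullet> i) * D2 F x i w)) (at x)"
    by (intro has_derivative_sum has_derivative_mult_right hd_D2[OF F x])
  have "((\<lambda>y. fd F y v) has_derivative (\<lambda>w. \<Sum>i\<in>Basis. (v \<bullet> i) * D2 F x i w)) (at x)"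
    by (rule has_derivative_transform_within_open[OF hd S x eq])
  then have "D2 F x v = (\<lambda>w. \<Sum>i\<in>Basis. (v \<bullet> i) * D2 F x i w)"
    unfolding D2_fd by (rule fd_eq)
  then show ?thesis by simp
qed

lemma D2_bilinear:
  fixes F :: "'a::euclidean_space \<Rightarrow> real"
  assumes S: "open S" and F: "Ck 2 S F" and x: "x \<in> S"
  shows "bilinear (D2 F x)"
  unfolding bilinear_def
proof (intro conjI allI)
  fix v show "linear (\<lambda>w. D2 F x v w)"
    using fd_linear[OF Ck2_diff1[OF F x]] unfolding D2_fd by simp
next
  fix w
  have e: "(\<lambda>v. D2 F x v w) = (\<lambda>v. \<Sum>i\<in>Basis. (v \<bullet> i) * D2 F x i w)"
    by (rule ext) (rule D2_lin1[OF S F x])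
  show "linear (\<lambda>v. D2 F x v w)"
    unfolding e
    by (rule linearI) (simp_all add: inner_add_left sum.distrib algebra_simps sum_distrib_left)
qed

lemma Dsp_def: "fd sph_par q = (\<lambda>d. fst d *\<^sub>R eT q + (snd d * sin (fst q)) *\<^sub>R eP q)"
  using hd_sp by (rule fd_eq)

lemma hd_fdcomp:
  fixes F :: "real^3 \<Rightarrow> real"
  assumes S: "open S" and F: "Ck 2 S F" and Q: "open Q" and QS: "\<And>q. q \<in> Q \<Longrightarrow> sph_par q \<in> S"
    and q: "q \<in> Q" and e: "(e has_derivative De) (at q)"
  shows "((\<lambda>q. fd F (sph_par q) (e q)) has_derivative
     (\<lambda>d. D2 F (sph_par q) (e q) (fst d *\<^sub>R eT q + (snd d * sin (fst q)) *\<^sub>R eP q) + fd F (sph_par q) (De d))) (at q)"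
proof -
  define Dp where "Dp = (\<lambda>d. fst d *\<^sub>R eT q + (snd d * sin (fst q)) *\<^sub>R eP q)"
  have pS: "sph_par q \<in> S" using QS q by auto
  have hi: "((\<lambda>q. fd F (sph_par q) i) has_derivative (\<lambda>d. D2 F (sph_par q) i (Dp d))) (at q)" for i
    using diff_chain_at[OF hd_sp hd_D2[OF F pS, of i]] by (simp add: o_def Dp_def)
  have he: "((\<lambda>q. e q \<bullet> i) has_derivative (\<lambda>d. De d \<bullet> i)) (at q)" for i
    by (rule bounded_linear.has_derivative[OF bounded_linear_inner_left e])
  have hd: "((\<lambda>q. \<Sum>i\<in>Basis. (e q \<bullet> i) * fd F (sph_par q) i) has_derivative
      (\<lambda>d. \<Sum>i\<in>Basis. (e q \<bullet> i) * D2 F (sph_par q) i (Dp d) + (De d \<bullet> i) * fd F (sph_par q) i)) (at q)"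
    by (intro has_derivative_sum has_derivative_mult he hi)
  have eq1: "(\<lambda>d. \<Sum>i\<in>Basis. (e q \<bullet> i) * D2 F (sph_par q) i (Dp d) + (De d \<bullet> i) * fd F (sph_par q) i)
     = (\<lambda>d. D2 F (sph_par q) (e q) (Dp d) + fd F (sph_par q) (De d))"
    by (rule ext) (simp only: sum.distrib D2_lin1[OF S F pS, of "e q", symmetric] fd_expand[OF Ck2_diff[OF F pS], symmetric])
  have eq2: "y \<in> Q \<Longrightarrow> (\<Sum>i\<in>Basis. (e y \<bullet> i) * fd F (sph_par y) i) = fd F (sph_par y) (e y)" for y
    using fd_expand[OF Ck2_diff[OF F QS], of y "e y"] by simp
  have "((\<lambda>x. fd F (sph_par x) (e x)) has_derivative
      (\<lambda>d. \<Sum>i\<in>Basis. (e q \<bullet> i) * D2 F (sph_par q) i (Dp d) + (De d \<bullet> i) * fd F (sph_par q) i)) (at q)"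
    by (rule has_derivative_transform_within_open[OF hd Q q]) (use eq2 in auto)
  then have "((\<lambda>x. fd F (sph_par x) (e x)) has_derivative (\<lambda>d. D2 F (sph_par q) (e q) (Dp d) + fd F (sph_par q) (De d))) (at q)" by (simp only: eq1)
  then show ?thesis by (simp only: Dp_def)
qed

lemma dT_cong: "open Q \<Longrightarrow> q \<in> Q \<Longrightarrow> (\<And>y. y \<in> Q \<Longrightarrow> f y = g y) \<Longrightarrow> f differentiable (at q) \<Longrightarrow> dT g q = dT f q"
  unfolding dT_def using fd_cong_open by metis
lemma dP_cong: "open Q \<Longrightarrow> q \<in> Q \<Longrightarrow> (\<And>y. y \<in> Q \<Longrightarrow> f y = g y) \<Longrightarrow> f differentiable (at q) \<Longrightarrow> dP g q = dP f q"
  unfolding dP_def using fd_cong_open by metis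

lemma hd_comp0:
  fixes F :: "real^3 \<Rightarrow> real"
  assumes "F differentiable (at (sph_par q))"
  shows "((\<lambda>q. F (sph_par q)) has_derivative (\<lambda>d. fd F (sph_par q) (fst d *\<^sub>R eT q + (snd d * sin (fst q)) *\<^sub>R eP q))) (at q)"
  using diff_chain_at[OF hd_sp fd_works[OF assms]] by (simp add: o_def)

lemma link1:
  fixes F :: "real^3 \<Rightarrow> real"
  assumes "F differentiable (at (sph_par q))"
  shows "dT (\<lambda>q. F (sph_par q)) q = fd F (sph_par q) (eT q)"
        "dP (\<lambda>q. F (sph_par q)) q = sin (fst q) * fd F (sph_par q) (eP q)"
proof -
  have l: "linear (fd F (sph_par q))" using assms by (rule fd_linear)
  note h = fd_eq[OF hd_comp0[OF assms]]
  show "dT (\<lambda>q. F (sph_par q)) q = fd F (sph_par q) (eT q)" unfolding dT_def h by simp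
  show "dP (\<lambda>q. F (sph_par q)) q = sin (fst q) * fd F (sph_par q) (eP q)" unfolding dP_def h
    by (simp add: linear_scale[OF l])
qed


lemma link2:
  fixes F :: "real^3 \<Rightarrow> real"
  assumes S: "open S" and F: "Ck 2 S F" and Q: "open Q" and QS: "\<And>q. q \<in> Q \<Longrightarrow> sph_par q \<in> S"
    and q: "q \<in> Q"
  shows "dT (dT (\<lambda>q. F (sph_par q))) q = D2 F (sph_par q) (eT q) (eT q) - fd F (sph_par q) (sph_par q)"
    "dP (dT (\<lambda>q. F (sph_par q))) q = sin (fst q) * D2 F (sph_par q) (eT q) (eP q) + cos (fst q) * fd F (sph_par q) (eP q)"
    "dT (dP (\<lambda>q. F (sph_par q))) q = cos (fst q) * fd F (sph_par q) (eP q) + sin (fst q) * D2 F (sph_par q) (eP q) (eT q)"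
    "dP (dP (\<lambda>q. F (sph_par q))) q = sin (fst q) * sin (fst q) * D2 F (sph_par q) (eP q) (eP q)
        - sin (fst q) * sin (fst q) * fd F (sph_par q) (sph_par q) - sin (fst q) * cos (fst q) * fd F (sph_par q) (eT q)"
proof -
  define p where "p = sph_par q"
  have pS: "p \<in> S" using QS q p_def by auto
  have B: "bilinear (D2 F p)" by (rule D2_bilinear[OF S F pS])
  have L: "linear (fd F p)" using fd_linear[OF Ck2_diff[OF F pS]] .
  note L' = L[unfolded p_def] and B' = B[unfolded p_def]
  have dif: "y \<in> Q \<Longrightarrow> F differentiable (at (sph_par y))" for y using Ck2_diff[OF F QS] by blast
  have gT: "y \<in> Q \<Longrightarrow> fd F (sph_par y) (eT y) = dT (\<lambda>q. F (sph_par q)) y" for y using link1(1)[OF dif] by simp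
  have gP: "y \<in> Q \<Longrightarrow> sin (fst y) * fd F (sph_par y) (eP y) = dP (\<lambda>q. F (sph_par q)) y" for y using link1(2)[OF dif] by simp
  note hT = hd_fdcomp[OF S F Q QS q hd_eT]
  note hP = hd_fdcomp[OF S F Q QS q hd_eP]
  have hP2: "((\<lambda>y. sin (fst y) * fd F (sph_par y) (eP y)) has_derivative
     (\<lambda>d. sin (fst q) * (D2 F (sph_par q) (eP q) (fst d *\<^sub>R eT q + (snd d * sin (fst q)) *\<^sub>R eP q) +
              fd F (sph_par q) (- snd d *\<^sub>R (sin (fst q) *\<^sub>R sph_par q + cos (fst q) *\<^sub>R eT q)))
          + fst d * cos (fst q) * fd F (sph_par q) (eP q))) (at q)"
    by (rule has_derivative_mult[OF d_trig(1) hP])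
  have dT1: "dT (dT (\<lambda>q. F (sph_par q))) q = dT (\<lambda>y. fd F (sph_par y) (eT y)) q"
    by (rule dT_cong[OF Q q gT]) (simp_all add: differentiableI[OF hT])
  have dP1: "dP (dT (\<lambda>q. F (sph_par q))) q = dP (\<lambda>y. fd F (sph_par y) (eT y)) q"
    by (rule dP_cong[OF Q q gT]) (simp_all add: differentiableI[OF hT])
  have dT2: "dT (dP (\<lambda>q. F (sph_par q))) q = dT (\<lambda>y. sin (fst y) * fd F (sph_par y) (eP y)) q"
    by (rule dT_cong[OF Q q gP]) (simp_all add: differentiableI[OF hP2])
  have dP2: "dP (dP (\<lambda>q. F (sph_par q))) q = dP (\<lambda>y. sin (fst y) * fd F (sph_par y) (eP y)) q"
    by (rule dP_cong[OF Q q gP]) (simp_all add: differentiableI[OF hP2])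
  show "dT (dT (\<lambda>q. F (sph_par q))) q = D2 F (sph_par q) (eT q) (eT q) - fd F (sph_par q) (sph_par q)"
    unfolding dT1 unfolding dT_def using fd_eq[OF hT] B L unfolding p_def by (simp add: linear_neg[OF L'])
  show "dP (dT (\<lambda>q. F (sph_par q))) q = sin (fst q) * D2 F (sph_par q) (eT q) (eP q) + cos (fst q) * fd F (sph_par q) (eP q)"
    unfolding dP1 unfolding dP_def using fd_eq[OF hT] B L unfolding p_def by (simp add: linear_scale[OF L'] bilinear_rmul[OF B'])
  show "dT (dP (\<lambda>q. F (sph_par q))) q = cos (fst q) * fd F (sph_par q) (eP q) + sin (fst q) * D2 F (sph_par q) (eP q) (eT q)"
    unfolding dT2 unfolding dT_def using fd_eq[OF hP2] B L unfolding p_def by (simp add: linear_0[OF L'])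
  show "dP (dP (\<lambda>q. F (sph_par q))) q = sin (fst q) * sin (fst q) * D2 F (sph_par q) (eP q) (eP q)
        - sin (fst q) * sin (fst q) * fd F (sph_par q) (sph_par q) - sin (fst q) * cos (fst q) * fd F (sph_par q) (eT q)"
    unfolding dP2 unfolding dP_def using fd_eq[OF hP2] B L unfolding p_def by (simp add: linear_scale[OF L'] linear_add[OF L'] linear_neg[OF L'] linear_diff[OF L'] bilinear_rmul[OF B'] algebra_simps)
qed



definition W1f :: "real \<Rightarrow> real \<Rightarrow> real \<Rightarrow> real \<Rightarrow> real \<Rightarrow> real \<Rightarrow> real \<Rightarrow> real \<Rightarrow> real \<Rightarrow> real" where
  "W1f g u1 u2 H11 H12 H22 h f1 f2 =
     2 * g * ((H11 - H22) / 2 * f1 + H12 * f2) - 2 * h * ((H11 - H22) / 2 * u1 + H12 * u2)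
     - (g * (H11 + H22) + 2 * g * g) * f1 + h * (H11 + H22 + 2 * g) * u1"

definition W2f :: "real \<Rightarrow> real \<Rightarrow> real \<Rightarrow> real \<Rightarrow> real \<Rightarrow> real \<Rightarrow> real \<Rightarrow> real \<Rightarrow> real \<Rightarrow> real" where
  "W2f g u1 u2 H11 H12 H22 h f1 f2 =
     2 * g * (H12 * f1 - (H11 - H22) / 2 * f2) - 2 * h * (H12 * u1 - (H11 - H22) / 2 * u2)
     - (g * (H11 + H22) + 2 * g * g) * f2 + h * (H11 + H22 + 2 * g) * u2"

definition Iframe :: "real \<Rightarrow> real \<Rightarrow> real \<Rightarrow> real \<Rightarrow> real \<Rightarrow> real \<Rightarrow> real \<Rightarrow> real \<Rightarrow> real \<Rightarrow> real \<Rightarrow> real" where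
  "Iframe u ph H11 H12 H21 H22 K11 K12 K21 K22 =
     ph * (H11 + H22 + 2 * u)^2
     + 2 * (u * (K11 * (H11 - (H11 + H22) / 2) + K12 * H12 + K21 * H21 + K22 * (H22 - (H11 + H22) / 2)))
     - ph * (2 * (H11^2 + H12^2 + H21^2 + H22^2) - (H11 + H22)^2)"

definition A1f :: "real \<Rightarrow> real \<Rightarrow> real \<Rightarrow> real \<Rightarrow> real \<Rightarrow> real \<Rightarrow> real \<Rightarrow> real \<Rightarrow> real \<Rightarrow> real \<Rightarrow> real \<Rightarrow> real \<Rightarrow> real \<Rightarrow> real \<Rightarrow> real \<Rightarrow> real \<Rightarrow> real" where
  "A1f s c g00 g10 g01 g20 g11 g02 g30 g21 g12 h00 h10 h01 h20 h11 = (let r = inverse s in (-2 * c * g00 * g01 * h11 * r^2 + 2 * c * g00 * g02 * h10 * r^2 + 2 * c * g00 * g10 * h00 + -2 * c * g00 * g10 * h20 + -4 * c * g00 * g11 * h01 * r^2 + -2 * c * g00 * g20 * h10 + -2 * c * g00^2 * h10 + -2 * c * g01 * g10 * h01 * r^2 + 6 * c * g01 * g11 * h00 * r^2 + 2 * c * g01^2 * h10 * r^2 + -2 * c * g02 * g10 * h00 * r^2 + 4 * c * g10 * g20 * h00 + 4 * c^2 * g00 * g01 * h01 * r^3 + -4 * c^2 * g01^2 * h00 * r^3 + 2 * g00 * g01 * h01 * r + -2 * g00 * g02 * h20 * r + 2 * g00 * g11 * h11 * r + -2 * g00 * g12 * h10 * r + 2 * g00 * g20 * h00 * s + 2 * g00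 * g21 * h01 * r + -2 * g00^2 * h20 * s + -2 * g01 * g11 * h10 * r + -2 * g01 * g21 * h00 * r + -2 * g01^2 * h00 * r + 2 * g02 * g20 * h00 * r + 2 * g10 * g11 * h01 * r + 2 * g10 * g12 * h00 * r + -2 * g11^2 * h00 * r))"

definition B2f :: "real \<Rightarrow> real \<Rightarrow> real \<Rightarrow> real \<Rightarrow> real \<Rightarrow> real \<Rightarrow> real \<Rightarrow> real \<Rightarrow> real \<Rightarrow> real \<Rightarrow> real \<Rightarrow> real \<Rightarrow> real \<Rightarrow> real \<Rightarrow> real \<Rightarrow> real \<Rightarrow> real" where
  "B2f s c g00 g10 g01 g20 g11 g02 g21 g12 g03 h00 h10 h01 h11 h02 = (let r = inverse s in (-2 * c * g00 * g01 * h11 * r^2 + -2 * c * g00 * g02 * h10 * r^2 + 2 * c * g01 * g10 * h01 * r^2 + 2 * c * g01 * g11 * h00 * r^2 + -2 * c * g01^2 * h10 * r^2 + 2 * c * g02 * g10 * h00 * r^2 + -2 * g00 * g01 * h01 * r + 2 * g00 * g02 * h00 * r + 2 * g00 * g11 * h11 * r + 2 * g00 * g12 * h10 * r + -2 * g00 * g20 * h02 * r + -2 * g00 * g21 * h01 * r + -2 * g00^2 * h02 * r + 2 * g01 * g11 * h10 * r + 2 * g01 * g21 * h00 * r + 2 * g01^2 * h00 * r + 2 * g02 * g20 * h00 * r + -2 * g10 * g11 * h01 * r + -2 * g10 * g12 * h00 * r + -2 * g11^2 * h00 * r))"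

lemma alg_main:
  fixes s c g00 g10 g01 g20 g11 g02 g30 g21 g12 g03 h00 h10 h01 h20 h11 h02 :: real
  assumes s: "s \<noteq> 0"
  shows "A1f s c g00 g10 g01 g20 g11 g02 g30 g21 g12 h00 h10 h01 h20 h11
       + B2f s c g00 g10 g01 g20 g11 g02 g21 g12 g03 h00 h10 h01 h11 h02
     = s * Iframe g00 h00 g20 ((g11 - c * (g01 / s)) / s) ((g11 - c * (g01 / s)) / s) ((g02 + s * c * g10) / (s * s))
                  h20 ((h11 - c * (h01 / s)) / s) ((h11 - c * (h01 / s)) / s) ((h02 + s * c * h10) / (s * s))
       - s * (g00 * (g20 + (g02 + s * c * g10) / (s * s)) + 2 * g00 * g00) * (h20 + (h02 + s * c * h10) / (s * s) + 2 * h00)"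
proof -
  obtain r where r: "inverse s = r" by blast
  have sr: "s * r = 1" using s r by auto
  have d: "x / s = x * r" for x using r by (simp add: divide_inverse)
  have d2: "x / (s * s) = x * r * r" for x using r by (simp add: divide_inverse)
  show ?thesis unfolding A1f_def B2f_def Iframe_def Let_def r d d2
    using sr by algebra
qed


lemma gen_inv: "(\<And>r. x * r = 1 \<Longrightarrow> P r) \<Longrightarrow> (x::real) \<noteq> 0 \<Longrightarrow> P (inverse x)"
  by simp

lemma inv2: "inverse (2::real) = 1/2" by simp

lemma inv_simps: "(x::real) / y = x * inverse y" "inverse (a * b) = inverse a * inverse (b::real)" "inverse (a ^ n) = (inverse a) ^ n"
  by (simp_all add: divide_inverse power_inverse)

lemma A_deriv:
  fixes Gzz Gtz Gzp Gtt Gtp Gpp Gttt Gttp Gtpp Hzz Htz Hzp Htt Htp :: "real \<Rightarrow> real"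
  assumes d: "(Gzz has_real_derivative Gtz t) (at t)" "(Gtz has_real_derivative Gtt t) (at t)"
    "(Gzp has_real_derivative Gtp t) (at t)" "(Gtt has_real_derivative Gttt t) (at t)"
    "(Gtp has_real_derivative Gttp t) (at t)" "(Gpp has_real_derivative Gtpp t) (at t)"
    "(Hzz has_real_derivative Htz t) (at t)" "(Htz has_real_derivative Htt t) (at t)"
    "(Hzp has_real_derivative Htp t) (at t)"
  and s: "sin t \<noteq> 0"
  shows "((\<lambda>t. sin t * W1f (Gzz t) (Gtz t) (Gzp t / sin t) (Gtt t) ((Gtp t - cos t * (Gzp t / sin t)) / sin t)
        ((Gpp t + sin t * cos t * Gtz t) / (sin t * sin t)) (Hzz t) (Htz t) (Hzp t / sin t))
     has_real_derivative A1f (sin t) (cos t) (Gzz t) (Gtz t) (Gzp t) (Gtt t) (Gtp t) (Gpp t) (Gttt t) (Gttp t) (Gtpp t)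
        (Hzz t) (Htz t) (Hzp t) (Htt t) (Htp t)) (at t)"
  unfolding W1f_def
  apply (rule derivative_eq_intros d refl | (use s in simp; fail))+
  unfolding A1f_def Let_def inv_simps
  unfolding inv2
  apply (rule gen_inv[of "sin t"])
   apply (erule rev_mp)
   apply algebra
  using s by simp

lemma B_deriv:
  fixes Gzz Gtz Gzp Gtt Gtp Gpp Gttp Gtpp Gppp Hzz Htz Hzp Htp Hpp :: "real \<Rightarrow> real"
  assumes d: "(Gzz has_real_derivative Gzp y) (at y)" "(Gtz has_real_derivative Gtp y) (at y)"
    "(Gzp has_real_derivative Gpp y) (at y)" "(Gtt has_real_derivative Gttp y) (at y)"
    "(Gtp has_real_derivative Gtpp y) (at y)" "(Gpp has_real_derivative Gppp y) (at y)"
    "(Hzz has_real_derivative Hzp y) (at y)" "(Htz has_real_derivative Htp y) (at y)"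
    "(Hzp has_real_derivative Hpp y) (at y)"
  and s: "s \<noteq> 0"
  shows "((\<lambda>y. W2f (Gzz y) (Gtz y) (Gzp y / s) (Gtt y) ((Gtp y - c * (Gzp y / s)) / s)
        ((Gpp y + s * c * Gtz y) / (s * s)) (Hzz y) (Htz y) (Hzp y / s))
     has_real_derivative B2f s c (Gzz y) (Gtz y) (Gzp y) (Gtt y) (Gtp y) (Gpp y) (Gttp y) (Gtpp y) (Gppp y)
        (Hzz y) (Htz y) (Hzp y) (Htp y) (Hpp y)) (at y)"
  unfolding W2f_def
  apply (rule derivative_eq_intros d refl | (use s in simp; fail))+
  unfolding B2f_def Let_def inv_simps
  unfolding inv2
  apply (rule gen_inv[of "s"])
   apply (erule rev_mp)
   apply algebra
  using s by simp



lemma hext_sphere: "x \<in> sphere 0 1 \<Longrightarrow> hext f x = f x"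
  by (simp add: hext_def sgn_div_norm)

lemma sgn_sphere: "y \<noteq> 0 \<Longrightarrow> sgn (y::'a::real_normed_vector) \<in> sphere 0 1"
  by (simp add: norm_sgn)

lemma hext_hom: "t > 0 \<Longrightarrow> hext f (t *\<^sub>R y) = hext f y"
  by (simp add: hext_def sgn_scaleR)

lemma fd_hom:
  fixes f :: "'a::real_normed_vector \<Rightarrow> 'b::real_normed_vector"
  assumes d: "f differentiable (at y)" and hom: "\<And>t. t > 0 \<Longrightarrow> f (t *\<^sub>R y) = f y"
  shows "fd f y y = 0"
proof -
  have h1: "((\<lambda>t. f (t *\<^sub>R y)) has_derivative (\<lambda>h. fd f y (h *\<^sub>R y))) (at 1)"
  proof -
    have "((\<lambda>t::real. t *\<^sub>R y) has_derivative (\<lambda>h. h *\<^sub>R y)) (at 1)"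
      by (rule has_derivative_scaleR_left[OF has_derivative_ident])
    from diff_chain_at[OF this, of f] fd_works[OF d] show ?thesis by (simp add: o_def)
  qed
  have h2: "((\<lambda>t. f (t *\<^sub>R y)) has_derivative (\<lambda>h. 0)) (at (1::real))"
  proof -
    have "((\<lambda>t. f y) has_derivative (\<lambda>h. 0)) (at (1::real))" by simp
    then show ?thesis by (rule has_derivative_transform_within_open[where s="{0<..}"]) (auto simp: hom)
  qed
  have "(\<lambda>h. fd f y (h *\<^sub>R y)) = (\<lambda>h. 0)" by (rule has_derivative_unique[OF h1 h2])
  then show ?thesis by (metis scale_one)
qed

lemma fd_hext_hom: "hext f differentiable (at y) \<Longrightarrow> fd (hext f) y y = 0"
  by (rule fd_hom) (auto simp: hext_hom)

lemma open_scone: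
  assumes "openin (top_of_set (sphere 0 1)) V"
  shows "open (scone V)"
proof -
  obtain W where W: "open W" "V = sphere 0 1 \<inter> W" using assms by (auto simp: openin_open)
  have c: "continuous_on (- {0}) (sgn :: real^3 \<Rightarrow> real^3)"
    using Ck_cont[OF Ck_sgn[of "- {0}" 0]] by auto
  have "open (sgn -` W \<inter> (- {0::real^3}))"
    using c W(1) continuous_on_open_vimage[of "- {0::real^3}" sgn] by (auto simp: open_Compl)
  moreover have "scone V = sgn -` W \<inter> (- {0})"
    using W(2) sgn_sphere by (auto simp: scone_def)
  ultimately show ?thesis by simp
qed

lemma Ck_union: "open A \<Longrightarrow> open B \<Longrightarrow> Ck n A f \<Longrightarrow> Ck n B f \<Longrightarrow> Ck n (A \<union> B) f"
proof (induction n arbitrary: f)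
  case 0 then show ?case by (simp add: continuous_on_open_Un)
next
  case (Suc n)
  have "Ck n (A \<union> B) (\<lambda>x. fd f x v)" for v using Suc by auto
  moreover have "continuous_on (A \<union> B) f" using Suc by (simp add: continuous_on_open_Un)
  moreover have "\<forall>x\<in>A \<union> B. f differentiable (at x)" using Suc by auto
  ultimately show ?case by simp
qed

lemma Cinf_union: "open A \<Longrightarrow> open B \<Longrightarrow> Cinf_on A f \<Longrightarrow> Cinf_on B f \<Longrightarrow> Cinf_on (A \<union> B) f"
  unfolding Cinf_on_def using Ck_union by blast

lemma fd_zero: "open O' \<Longrightarrow> y \<in> O' \<Longrightarrow> (\<And>z. z \<in> O' \<Longrightarrow> f z = 0) \<Longrightarrow> fd f y = (\<lambda>v. 0)"
  using fd_cong_open[of O' y "\<lambda>z. 0" f] by (simp add: frechet_derivative_const)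

lemma D2_zero: "open O' \<Longrightarrow> y \<in> O' \<Longrightarrow> (\<And>z. z \<in> O' \<Longrightarrow> f z = 0) \<Longrightarrow> D2 f y v w = 0"
proof -
  assume a: "open O'" "y \<in> O'" "\<And>z. z \<in> O' \<Longrightarrow> f z = 0"
  have "z \<in> O' \<Longrightarrow> fd f z v = 0" for z using fd_zero[OF a(1) _ a(3)] by simp
  then show ?thesis unfolding D2_def using fd_zero[OF a(1,2), of "\<lambda>z. fd f z v"] by simp
qed



lemma fd_expand_vec:
  fixes f :: "'a::euclidean_space \<Rightarrow> 'b::real_normed_vector"
  assumes "f differentiable (at x)"
  shows "fd f x v = (\<Sum>i\<in>Basis. (v \<bullet> i) *\<^sub>R fd f x i)"
proof -
  have l: "linear (fd f x)" using assms by (rule fd_linear)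
  have "fd f x v = fd f x (\<Sum>i\<in>Basis. (v \<bullet> i) *\<^sub>R i)" by (simp add: euclidean_representation)
  also have "\<dots> = (\<Sum>i\<in>Basis. (v \<bullet> i) *\<^sub>R fd f x i)" by (simp add: linear_sum[OF l] linear_scale[OF l])
  finally show ?thesis .
qed

lemma Ck_tproj: "open S \<Longrightarrow> Ck n S (\<lambda>z. tproj z b)"
  unfolding tproj_def
  by (intro Ck_diff_fun Ck_const Ck_scaleR Ck_bl bounded_linear_inner_right bounded_linear_ident) auto

lemma Ck_sph_div:
  assumes S: "open S" and G: "Cinf_on S (hext Y)"
  shows "Ck n S (\<lambda>z. sph_div Y z)"
proof -
  have e: "sph_div Y z = (\<Sum>b\<in>Basis. \<Sum>i\<in>Basis. (tproj z b \<bullet> i) * (fd (hext Y) z i \<bullet> tproj z b))" if z: "z \<in> S" for z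
  proof -
    have "fd (hext Y) z (tproj z b) \<bullet> tproj z b = (\<Sum>i\<in>Basis. (tproj z b \<bullet> i) * (fd (hext Y) z i \<bullet> tproj z b))" for b
      using fd_expand_vec[OF Cinf_diff[OF G z], of "tproj z b"] by (simp add: inner_sum_left)
    then show ?thesis unfolding sph_div_def cov_deriv_def D1_def by simp
  qed
  show ?thesis
  proof (rule Ck_cong[OF S e[symmetric]])
    show "Ck n S (\<lambda>x. \<Sum>b\<in>Basis. \<Sum>i\<in>Basis. tproj x b \<bullet> i * (fd (hext Y) x i \<bullet> tproj x b))"
      by (intro Ck_sum Ck_mult Ck_inner Ck_tproj Ck_const S finite_Basis Cinf_Ck Cinf_D G)
  qed
qed

locale sphctx =
  fixes U :: "(real^3) set" and Y :: "real^3 \<Rightarrow> real^3" and u :: "real^3 \<Rightarrow> real" and K :: "(real^3) set"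
  assumes Usub: "U \<subseteq> sphere 0 1"
    and Uopen: "openin (top_of_set (sphere 0 1)) U"
    and Ysm: "Cinf_on (scone U) (hext Y)"
    and Ytan: "\<forall>x\<in>U. Y x \<bullet> x = 0"
    and CK: "conformal_killing_on U Y"
    and usm: "Cinf_on (scone U) (hext u)"
    and Kc: "compact K" and KU: "K \<subseteq> U" and u0: "\<forall>x\<in>sphere 0 1 - K. u x = 0"
begin

definition "SK = scone (sphere 0 1 - K)"
definition phi where "phi = (\<lambda>y. sph_div Y y / 2)"

lemma SU_open: "open (scone U)" by (rule open_scone[OF Uopen])

lemma SK_open: "open SK"
proof -
  have "closedin (top_of_set (sphere 0 1)) K"
    using KU Usub Kc by (intro closed_subset) (auto intro: compact_imp_closed)
  then have "openin (top_of_set (sphere 0 1)) (sphere 0 1 - K)"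
    by (intro openin_diff) auto
  then show ?thesis unfolding SK_def by (rule open_scone)
qed

lemma U_SU: "U \<subseteq> scone U"
  using Usub by (auto simp: scone_def sgn_div_norm)

lemma SU_SK: "scone U \<union> SK = - {0}"
  using KU sgn_sphere by (auto simp: scone_def SK_def)

lemma F_zero: "y \<in> SK \<Longrightarrow> hext u y = 0"
  using u0 sgn_sphere by (auto simp: SK_def scone_def hext_def)

lemma F_smooth: "Cinf_on (- {0}) (hext u)"
proof -
  have "Cinf_on SK (hext u)"
    by (rule Cinf_cong[OF SK_open, of "\<lambda>y. 0"]) (auto simp: F_zero Cinf_on_def Ck_const)
  then show ?thesis using Cinf_union[OF SU_open SK_open usm] SU_SK by simp
qed

lemma phi_smooth: "Cinf_on (scone U) phi"
  unfolding phi_def Cinf_on_def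
proof
  fix n
  have "Ck n (scone U) (\<lambda>z. sph_div Y z * (1/2))"
    by (intro Ck_mult Ck_sph_div[OF SU_open Ysm] Ck_const SU_open)
  then show "Ck n (scone U) (\<lambda>y. sph_div Y y / 2)" by simp
qed

lemma Phi_smooth: "Cinf_on (scone U) (hext phi)"
  unfolding Cinf_on_def hext_def
proof
  fix n
  have sg: "Ck n (scone U) sgn" by (rule Ck_sgn[OF SU_open]) (auto simp: scone_def)
  have im: "sgn ` scone U \<subseteq> scone U" using U_SU by (auto simp: scone_def)
  show "Ck n (scone U) (\<lambda>y. phi (sgn y))"
    by (rule Ck_comp[OF SU_open SU_open im Cinf_Ck[OF phi_smooth] sg])
qed

end



lemma open_slice_T: "open (Q::(real\<times>real) set) \<Longrightarrow> open {t. (t, y) \<in> Q}"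
proof -
  assume Q: "open Q"
  have "{t. (t, y) \<in> Q} = (\<lambda>t. (t, y)) -` Q" by auto
  moreover have "open ((\<lambda>t::real. (t, y)) -` Q)"
    by (rule continuous_open_vimage[OF Q]) (auto intro!: continuous_intros)
  ultimately show ?thesis by simp
qed

lemma open_slice_P: "open (Q::(real\<times>real) set) \<Longrightarrow> open {y. (t, y) \<in> Q}"
proof -
  assume Q: "open Q"
  have "{y. (t, y) \<in> Q} = (\<lambda>y. (t, y)) -` Q" by auto
  moreover have "open ((\<lambda>y::real. (t, y)) -` Q)"
    by (rule continuous_open_vimage[OF Q]) (auto intro!: continuous_intros)
  ultimately show ?thesis by simp
qed

lemma dT_via:
  assumes Q: "open Q" and q: "(t, y) \<in> Q" and d: "f differentiable (at (t, y))"
    and e: "\<And>t'. (t', y) \<in> Q \<Longrightarrow> f (t', y) = E t'" and D: "(E has_real_derivative D) (at t)"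
  shows "dT f (t, y) = D"
proof -
  have "((\<lambda>t'. f (t', y)) has_real_derivative D) (at t)"
    by (rule has_field_derivative_transform_within_open[OF D open_slice_T[OF Q]]) (use q e in auto)
  then show ?thesis using deriv_T[OF d] DERIV_unique by blast
qed

lemma dP_via:
  assumes Q: "open Q" and q: "(t, y) \<in> Q" and d: "f differentiable (at (t, y))"
    and e: "\<And>y'. (t, y') \<in> Q \<Longrightarrow> f (t, y') = E y'" and D: "(E has_real_derivative D) (at y)"
  shows "dP f (t, y) = D"
proof -
  have "((\<lambda>y'. f (t, y')) has_real_derivative D) (at y)"
    by (rule has_field_derivative_transform_within_open[OF D open_slice_P[OF Q]]) (use q e in auto)
  then show ?thesis using deriv_P[OF d] DERIV_unique by blast
qed

lemma Cinf_Ck2: "Cinf_on Q f \<Longrightarrow> Ck 2 Q f" by (rule Cinf_Ck)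

lemma S1: "open Q \<Longrightarrow> Cinf_on Q f \<Longrightarrow> q \<in> Q \<Longrightarrow> dT (dP f) q = dP (dT f) q"
  using schwarz[OF _ Cinf_Ck2] by metis

lemma S2: "open Q \<Longrightarrow> Cinf_on Q f \<Longrightarrow> q \<in> Q \<Longrightarrow> dT (dP (dT f)) q = dP (dT (dT f)) q"
  using S1[of Q "dT f"] Cinf_dT by metis

lemma S3: "open Q \<Longrightarrow> Cinf_on Q f \<Longrightarrow> q \<in> Q \<Longrightarrow> dT (dP (dP f)) q = dP (dP (dT f)) q"
proof -
  assume Q: "open Q" and f: "Cinf_on Q f" and q: "q \<in> Q"
  have "dT (dP (dP f)) q = dP (dT (dP f)) q" using S1[OF Q Cinf_dP[OF f] q] .
  also have "\<dots> = dP (dP (dT f)) q"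
    by (rule dP_cong[OF Q q]) (use S1[OF Q f] Cinf_diff[OF Cinf_dP[OF Cinf_dT[OF f]] q] in auto)
  finally show ?thesis .
qed

lemma dT_zero: "open Q \<Longrightarrow> (\<And>z. z \<in> Q \<Longrightarrow> f z = 0) \<Longrightarrow> q \<in> Q \<Longrightarrow> dT f q = 0"
  unfolding dT_def using fd_zero by metis
lemma dP_zero: "open Q \<Longrightarrow> (\<And>z. z \<in> Q \<Longrightarrow> f z = 0) \<Longrightarrow> q \<in> Q \<Longrightarrow> dP f q = 0"
  unfolding dP_def using fd_zero by metis

lemma deriv_T': "Cinf_on Q f \<Longrightarrow> (t, y) \<in> Q \<Longrightarrow> ((\<lambda>t. f (t, y)) has_real_derivative dT f (t, y)) (at t)"
  using deriv_T Cinf_diff by blast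
lemma deriv_P': "Cinf_on Q f \<Longrightarrow> (t, y) \<in> Q \<Longrightarrow> ((\<lambda>y. f (t, y)) has_real_derivative dP f (t, y)) (at y)"
  using deriv_P Cinf_diff by blast

context sphctx
begin

definition "QU = {q. sph_par q \<in> U}"
definition "QK = {q. sph_par q \<notin> K}"

lemma cont_sp_at: "continuous (at q) sph_par"
  by (metis continuous_on_eq_continuous_at open_UNIV UNIV_I cont_sp)

lemma QU_open: "open QU"
proof -
  have "QU = sph_par -` scone U"
    by (auto simp: QU_def scone_def sgn_div_norm)
  then show ?thesis using continuous_open_vimage[OF SU_open cont_sp_at] by simp
qed

lemma QK_open: "open QK"
proof -
  have "QK = sph_par -` (- K)" by (auto simp: QK_def)
  moreover have "open (- K)" using Kc by (simp add: compact_imp_closed open_Compl)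
  ultimately show ?thesis using continuous_open_vimage[OF _ cont_sp_at] by metis
qed

lemma QU_QK: "QU \<union> QK = UNIV"
  using KU by (auto simp: QU_def QK_def)

definition "gg q = hext u (sph_par q)"
definition "hh q = hext phi (sph_par q)"
definition "aa q = hext Y (sph_par q) \<bullet> eT q"
definition "bb q = hext Y (sph_par q) \<bullet> eP q"

lemma gg_smooth: "Cinf_on UNIV gg"
  unfolding Cinf_on_def gg_def
proof
  fix n
  show "Ck n UNIV (\<lambda>q. hext u (sph_par q))"
    by (rule Ck_comp[OF _ open_UNIV _ Cinf_Ck[OF F_smooth] Ck_sp[OF open_UNIV]]) auto
qed

lemma hh_smooth: "Cinf_on QU hh"
  unfolding Cinf_on_def hh_def
proof
  fix n
  show "Ck n QU (\<lambda>q. hext phi (sph_par q))"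
    by (rule Ck_comp[OF SU_open QU_open _ Cinf_Ck[OF Phi_smooth] Ck_sp[OF QU_open]])
       (use U_SU in \<open>auto simp: QU_def\<close>)
qed

lemma GP_smooth: "Ck n QU (\<lambda>q. hext Y (sph_par q))"
proof (rule Ck_componentwise[OF QU_open])
  fix i :: "real^3" assume "i \<in> Basis"
  have "Ck n (scone U) (\<lambda>y. hext Y y \<bullet> i)"
    by (rule Ck_blcomp[OF bounded_linear_inner_left SU_open Cinf_Ck[OF Ysm]])
  moreover have im: "sph_par ` QU \<subseteq> scone U" using U_SU by (auto simp: QU_def)
  ultimately show "Ck n QU (\<lambda>x. hext Y (sph_par x) \<bullet> i)"
    using Ck_comp[OF SU_open QU_open im _ Ck_sp[OF QU_open]] by blast
qed

lemma aa_smooth: "Cinf_on QU aa"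
  unfolding Cinf_on_def aa_def
  by (intro allI Ck_inner[OF QU_open GP_smooth Ck_eT[OF QU_open]])

lemma bb_smooth: "Cinf_on QU bb"
  unfolding Cinf_on_def bb_def
  by (intro allI Ck_inner[OF QU_open GP_smooth Ck_eP[OF QU_open]])

lemma gg_zero: "q \<in> QK \<Longrightarrow> gg q = 0"
  unfolding gg_def QK_def using u0 hext_sphere[of "sph_par q" u] by auto

end



context sphctx
begin

lemma pU_SU: "q \<in> QU \<Longrightarrow> sph_par q \<in> scone U" using U_SU by (auto simp: QU_def)

lemma G_diff: "q \<in> QU \<Longrightarrow> hext Y differentiable (at (sph_par q))"
  using Cinf_diff[OF Ysm pU_SU] by blast

lemma G_tan: "q \<in> QU \<Longrightarrow> hext Y (sph_par q) \<bullet> sph_par q = 0"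
  using Ytan hext_sphere[of "sph_par q" Y] by (auto simp: QU_def)

lemma hd_GP: "q \<in> QU \<Longrightarrow> ((\<lambda>q. hext Y (sph_par q)) has_derivative
   (\<lambda>d. fd (hext Y) (sph_par q) (fst d *\<^sub>R eT q + (snd d * sin (fst q)) *\<^sub>R eP q))) (at q)"
  using diff_chain_at[OF hd_sp fd_works[OF G_diff]] by (simp add: o_def)

lemma aa_derivs:
  assumes q: "q \<in> QU"
  shows "dT aa q = fd (hext Y) (sph_par q) (eT q) \<bullet> eT q"
    "dP aa q = cos (fst q) * bb q + sin (fst q) * (fd (hext Y) (sph_par q) (eP q) \<bullet> eT q)"
    "dT bb q = fd (hext Y) (sph_par q) (eT q) \<bullet> eP q"
    "dP bb q = sin (fst q) * (fd (hext Y) (sph_par q) (eP q) \<bullet> eP q) - cos (fst q) * aa q"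
proof -
  have L: "linear (fd (hext Y) (sph_par q))" using fd_linear[OF G_diff[OF q]] .
  note ha = fd_eq[OF has_derivative_inner[OF hd_GP[OF q] hd_eT]]
  note hb = fd_eq[OF has_derivative_inner[OF hd_GP[OF q] hd_eP]]
  have t: "hext Y (sph_par q) \<bullet> sph_par q = 0" by (rule G_tan[OF q])
  show "dT aa q = fd (hext Y) (sph_par q) (eT q) \<bullet> eT q"
    unfolding dT_def aa_def[abs_def] ha using t by simp
  show "dP aa q = cos (fst q) * bb q + sin (fst q) * (fd (hext Y) (sph_par q) (eP q) \<bullet> eT q)"
    unfolding dP_def aa_def[abs_def] ha by (simp add: bb_def linear_scale[OF L])
  show "dT bb q = fd (hext Y) (sph_par q) (eT q) \<bullet> eP q"
    unfolding dT_def bb_def[abs_def] hb by simp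
  show "dP bb q = sin (fst q) * (fd (hext Y) (sph_par q) (eP q) \<bullet> eP q) - cos (fst q) * aa q"
    unfolding dP_def bb_def[abs_def] hb using t
    by (simp add: aa_def linear_scale[OF L] inner_add_right algebra_simps)
qed

lemma div_frame: "q \<in> QU \<Longrightarrow> sph_div Y (sph_par q) =
   fd (hext Y) (sph_par q) (eT q) \<bullet> eT q + fd (hext Y) (sph_par q) (eP q) \<bullet> eP q"
proof -
  assume q: "q \<in> QU"
  have B: "bilinear (\<lambda>v w. fd (hext Y) (sph_par q) v \<bullet> w)"
    by (rule bilinear_innerD[OF fd_linear[OF G_diff[OF q]]])
  show ?thesis unfolding sph_div_def cov_deriv_def D1_def using frame_sum[OF B] by simp
qed

lemma ck_frame:
  assumes q: "q \<in> QU"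
  shows "fd (hext Y) (sph_par q) (eT q) \<bullet> eT q = phi (sph_par q)"
    "fd (hext Y) (sph_par q) (eP q) \<bullet> eP q = phi (sph_par q)"
    "fd (hext Y) (sph_par q) (eT q) \<bullet> eP q + fd (hext Y) (sph_par q) (eP q) \<bullet> eT q = 0"
proof -
  have pU: "sph_par q \<in> U" using q by (simp add: QU_def)
  have c: "\<And>v w. v \<bullet> sph_par q = 0 \<Longrightarrow> w \<bullet> sph_par q = 0 \<Longrightarrow>
      fd (hext Y) (sph_par q) v \<bullet> w + fd (hext Y) (sph_par q) w \<bullet> v - sph_div Y (sph_par q) * (v \<bullet> w) = 0"
    using CK pU unfolding conformal_killing_on_def cov_deriv_def D1_def by blast
  note d = div_frame[OF q]
  show "fd (hext Y) (sph_par q) (eT q) \<bullet> eT q = phi (sph_par q)"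
    using c[of "eT q" "eT q"] c[of "eP q" "eP q"] d by (simp add: phi_def)
  show "fd (hext Y) (sph_par q) (eP q) \<bullet> eP q = phi (sph_par q)"
    using c[of "eT q" "eT q"] c[of "eP q" "eP q"] d by (simp add: phi_def)
  show "fd (hext Y) (sph_par q) (eT q) \<bullet> eP q + fd (hext Y) (sph_par q) (eP q) \<bullet> eT q = 0"
    using c[of "eT q" "eP q"] by simp
qed

lemma hh_phi: "q \<in> QU \<Longrightarrow> hh q = phi (sph_par q)"
  unfolding hh_def by (rule hext_sphere) simp

lemma CK1: "q \<in> QU \<Longrightarrow> hh q = dT aa q"
  using hh_phi aa_derivs(1) ck_frame(1) by simp

lemma CK2: "q \<in> QU \<Longrightarrow> dP bb q = sin (fst q) * dT aa q - cos (fst q) * aa q"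
  using aa_derivs(1,4) ck_frame(1,2) by simp

lemma CK3: "q \<in> QU \<Longrightarrow> dP aa q = cos (fst q) * bb q - sin (fst q) * dT bb q"
proof -
  assume q: "q \<in> QU"
  have "fd (hext Y) (sph_par q) (eP q) \<bullet> eT q = - dT bb q"
    using aa_derivs(3)[OF q] ck_frame(3)[OF q] by linarith
  then show ?thesis using aa_derivs(2)[OF q] by simp
qed


lemma aa_jets_smooth: "Cinf_on QU (dT aa)" "Cinf_on QU (dT (dT aa))" "Cinf_on QU (dT (dT (dT aa)))"
  "Cinf_on QU (dT bb)" "Cinf_on QU (dP aa)" "Cinf_on QU (dP bb)"
  using aa_smooth bb_smooth by (auto intro!: Cinf_dT Cinf_dP)

lemma hh_jets:
  assumes q: "q \<in> QU"
  shows "dT hh q = dT (dT aa) q" "dT (dT hh) q = dT (dT (dT aa)) q"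
     "dP hh q = dP (dT aa) q" "dP (dP hh) q = dP (dP (dT aa)) q"
proof -
  have e0: "z \<in> QU \<Longrightarrow> dT aa z = hh z" for z using CK1 by simp
  have e1: "z \<in> QU \<Longrightarrow> dT hh z = dT (dT aa) z" for z
    by (rule dT_cong[OF QU_open _ e0]) (use Cinf_diff[OF aa_jets_smooth(1)] in auto)
  have e2: "z \<in> QU \<Longrightarrow> dP hh z = dP (dT aa) z" for z
    by (rule dP_cong[OF QU_open _ e0]) (use Cinf_diff[OF aa_jets_smooth(1)] in auto)
  show "dT hh q = dT (dT aa) q" using e1[OF q] by simp
  show "dP hh q = dP (dT aa) q" using e2[OF q] by simp
  show "dT (dT hh) q = dT (dT (dT aa)) q"
    by (rule dT_cong[OF QU_open q e1[symmetric]]) (use Cinf_diff[OF aa_jets_smooth(2) q] in auto)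
  show "dP (dP hh) q = dP (dP (dT aa)) q"
    by (rule dP_cong[OF QU_open q e2[symmetric]]) (use Cinf_diff[OF Cinf_dP[OF aa_jets_smooth(1)] q] in auto)
qed

lemma PPa:
  assumes q: "(t, y) \<in> QU"
  shows "dP (dP aa) (t, y) = cos t * sin t * dT aa (t, y) - aa (t, y) - sin t * sin t * dT (dT aa) (t, y)"
proof -
  have sc: "sin t * sin t + cos t * cos t = 1" by (rule sc1)
  have d1: "dP (dP aa) (t, y) = cos t * dP bb (t, y) - sin t * dP (dT bb) (t, y)"
  proof (rule dP_via[OF QU_open q Cinf_diff[OF aa_jets_smooth(5) q]])
    show "(t, y') \<in> QU \<Longrightarrow> dP aa (t, y') = cos t * bb (t, y') - sin t * dT bb (t, y')" for y'
      using CK3[of "(t, y')"] by simp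
    show "((\<lambda>y'. cos t * bb (t, y') - sin t * dT bb (t, y')) has_real_derivative
        cos t * dP bb (t, y) - sin t * dP (dT bb) (t, y)) (at y)"
      by (intro DERIV_diff DERIV_cmult deriv_P'[OF bb_smooth q] deriv_P'[OF aa_jets_smooth(4) q])
  qed
  have d2: "dP (dT bb) (t, y) = dT (dP bb) (t, y)" using S1[OF QU_open bb_smooth q] by simp
  have d3: "dT (dP bb) (t, y) = (cos t * dT aa (t, y) + sin t * dT (dT aa) (t, y)) - (- sin t * aa (t, y) + cos t * dT aa (t, y))"
  proof (rule dT_via[OF QU_open q Cinf_diff[OF aa_jets_smooth(6) q]])
    show "(t', y) \<in> QU \<Longrightarrow> dP bb (t', y) = sin t' * dT aa (t', y) - cos t' * aa (t', y)" for t'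
      using CK2[of "(t', y)"] by simp
    show "((\<lambda>t'. sin t' * dT aa (t', y) - cos t' * aa (t', y)) has_real_derivative
        (cos t * dT aa (t, y) + sin t * dT (dT aa) (t, y)) - (- sin t * aa (t, y) + cos t * dT aa (t, y))) (at t)"
      by (rule derivative_eq_intros deriv_T'[OF aa_smooth q] deriv_T'[OF aa_jets_smooth(1) q] refl | simp add: algebra_simps)+
  qed
  have d4: "dP bb (t, y) = sin t * dT aa (t, y) - cos t * aa (t, y)" using CK2[OF q] by simp
  show ?thesis unfolding d1 d2 d3 d4 using sc by algebra
qed

lemma lap_h:
  assumes q: "q \<in> QU" and s: "sin (fst q) \<noteq> 0"
  shows "dT (dT hh) q + (dP (dP hh) q + sin (fst q) * cos (fst q) * dT hh q) / (sin (fst q) * sin (fst q)) + 2 * hh q = 0"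
proof -
  obtain t y where qq: "q = (t, y)" by (cases q)
  have q': "(t, y) \<in> QU" using q qq by simp
  have s': "sin t \<noteq> 0" using s qq by simp
  have sc: "sin t * sin t + cos t * cos t = 1" by (rule sc1)
  have e: "dP (dP (dT aa)) (t, y) = dT (dP (dP aa)) (t, y)" using S3[OF QU_open aa_smooth q'] by simp
  have d: "dT (dP (dP aa)) (t, y) =
      ((- sin t * sin t + cos t * cos t) * dT aa (t, y) + cos t * sin t * dT (dT aa) (t, y)) - dT aa (t, y)
      - ((cos t * sin t + sin t * cos t) * dT (dT aa) (t, y) + sin t * sin t * dT (dT (dT aa)) (t, y))"
  proof (rule dT_via[OF QU_open q' Cinf_diff[OF Cinf_dP[OF aa_jets_smooth(5)] q']])
    show "(t', y) \<in> QU \<Longrightarrow> dP (dP aa) (t', y) = cos t' * sin t' * dT aa (t', y) - aa (t', y) - sin t' * sin t' * dT (dT aa) (t', y)" for t'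
      by (rule PPa)
    show "((\<lambda>t'. cos t' * sin t' * dT aa (t', y) - aa (t', y) - sin t' * sin t' * dT (dT aa) (t', y)) has_real_derivative
      ((- sin t * sin t + cos t * cos t) * dT aa (t, y) + cos t * sin t * dT (dT aa) (t, y)) - dT aa (t, y)
      - ((cos t * sin t + sin t * cos t) * dT (dT aa) (t, y) + sin t * sin t * dT (dT (dT aa)) (t, y))) (at t)"
      by (rule derivative_eq_intros deriv_T'[OF aa_smooth q'] deriv_T'[OF aa_jets_smooth(1) q']
            deriv_T'[OF aa_jets_smooth(2) q'] refl | simp add: algebra_simps)+
  qed
  have hj: "dT (dT hh) q = dT (dT (dT aa)) (t, y)" "dP (dP hh) q = dP (dP (dT aa)) (t, y)"
    "dT hh q = dT (dT aa) (t, y)" "hh q = dT aa (t, y)"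
    using hh_jets[OF q] CK1[OF q] qq by simp_all
  have hj': "dT (dT hh) (t, y) = dT (dT (dT aa)) (t, y)" "dP (dP hh) (t, y) = dP (dP (dT aa)) (t, y)"
    "dT hh (t, y) = dT (dT aa) (t, y)" "hh (t, y) = dT aa (t, y)"
    using hj qq by simp_all
  have "dT (dT (dT aa)) (t, y) + (((- sin t * sin t + cos t * cos t) * dT aa (t, y) + cos t * sin t * dT (dT aa) (t, y)) - dT aa (t, y)
      - ((cos t * sin t + sin t * cos t) * dT (dT aa) (t, y) + sin t * sin t * dT (dT (dT aa)) (t, y))
      + sin t * cos t * dT (dT aa) (t, y)) / (sin t * sin t) + 2 * dT aa (t, y) = 0"
  proof -
    have "((- sin t * sin t + cos t * cos t) * dT aa (t, y) + cos t * sin t * dT (dT aa) (t, y)) - dT aa (t, y)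
      - ((cos t * sin t + sin t * cos t) * dT (dT aa) (t, y) + sin t * sin t * dT (dT (dT aa)) (t, y))
      + sin t * cos t * dT (dT aa) (t, y) = (sin t * sin t) * (- dT (dT (dT aa)) (t, y) - 2 * dT aa (t, y))"
      using sc by algebra
    then show ?thesis using s' by simp
  qed
  then show ?thesis unfolding qq hj' e d by simp
qed

end



lemma D2_expand:
  fixes F :: "'a::euclidean_space \<Rightarrow> real"
  assumes S: "open S" and F: "Cinf_on S F" and y: "y \<in> S"
  shows "D2 F y v w = (\<Sum>i\<in>Basis. \<Sum>j\<in>Basis. (v \<bullet> i) * (w \<bullet> j) * D2 F y i j)"
proof -
  have F2: "Ck 2 S F" using F by (rule Cinf_Ck)
  have "D2 F y v w = (\<Sum>i\<in>Basis. (v \<bullet> i) * D2 F y i w)" by (rule D2_lin1[OF S F2 y])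
  also have "\<dots> = (\<Sum>i\<in>Basis. (v \<bullet> i) * (\<Sum>j\<in>Basis. (w \<bullet> j) * D2 F y i j))"
  proof -
    have "D2 F y i w = (\<Sum>j\<in>Basis. (w \<bullet> j) * D2 F y i j)" for i
      unfolding D2_fd by (rule fd_expand[OF Ck2_diff1[OF F2 y]])
    then show ?thesis by simp
  qed
  finally show ?thesis by (simp add: sum_distrib_left mult.assoc)
qed

lemma cont_D2_comp:
  fixes F :: "real^3 \<Rightarrow> real"
  assumes S: "open S" and F: "Cinf_on S F" and QS: "sph_par ` Q \<subseteq> S"
    and e1: "continuous_on Q e1" and e2: "continuous_on Q e2"
  shows "continuous_on Q (\<lambda>q. D2 F (sph_par q) (e1 q) (e2 q))"
proof -
  have ij: "continuous_on S (\<lambda>y. D2 F y i j)" for i j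
  proof -
    have "Cinf_on S (\<lambda>y. fd (\<lambda>y. fd F y i) y j)" by (intro Cinf_D F)
    then show ?thesis unfolding D2_def by (rule Cinf_cont)
  qed
  have c: "continuous_on Q (\<lambda>q. \<Sum>i\<in>Basis. \<Sum>j\<in>Basis. (e1 q \<bullet> i) * (e2 q \<bullet> j) * D2 F (sph_par q) i j)"
    by (intro continuous_intros e1 e2 continuous_on_compose2[OF ij cont_sp QS])
  show ?thesis
    by (rule continuous_on_cong[THEN iffD1, OF refl _ c]) (use D2_expand[OF S F] QS in auto)
qed

lemma cont_fd_comp:
  fixes F :: "real^3 \<Rightarrow> real"
  assumes S: "open S" and F: "Cinf_on S F" and QS: "sph_par ` Q \<subseteq> S"
    and e1: "continuous_on Q e1"
  shows "continuous_on Q (\<lambda>q. fd F (sph_par q) (e1 q))"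
proof -
  have ij: "continuous_on S (\<lambda>y. fd F y i)" for i
    using Cinf_cont[OF Cinf_D[OF F]] by blast
  have c: "continuous_on Q (\<lambda>q. \<Sum>i\<in>Basis. (e1 q \<bullet> i) * fd F (sph_par q) i)"
    by (intro continuous_intros e1 continuous_on_compose2[OF ij cont_sp QS])
  show ?thesis
  proof (rule continuous_on_cong[THEN iffD1, OF refl _ c])
    fix q assume "q \<in> Q"
    then have "sph_par q \<in> S" using QS by auto
    then show "(\<Sum>i\<in>Basis. (e1 q \<bullet> i) * fd F (sph_par q) i) = fd F (sph_par q) (e1 q)"
      using fd_expand[OF Cinf_diff[OF F], of "sph_par q" "e1 q"] by simp
  qed
qed

context sphctx
begin

lemma F_links:
  shows "dT gg q = fd (hext u) (sph_par q) (eT q)"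
    "dP gg q = sin (fst q) * fd (hext u) (sph_par q) (eP q)"
    "dT (dT gg) q = D2 (hext u) (sph_par q) (eT q) (eT q)"
    "dP (dT gg) q = sin (fst q) * D2 (hext u) (sph_par q) (eT q) (eP q) + cos (fst q) * fd (hext u) (sph_par q) (eP q)"
    "dT (dP gg) q = cos (fst q) * fd (hext u) (sph_par q) (eP q) + sin (fst q) * D2 (hext u) (sph_par q) (eP q) (eT q)"
    "dP (dP gg) q = sin (fst q) * sin (fst q) * D2 (hext u) (sph_par q) (eP q) (eP q) - sin (fst q) * cos (fst q) * fd (hext u) (sph_par q) (eT q)"
proof -
  have S: "open (- {0::real^3})" by (simp add: open_Compl)
  have F2: "Ck 2 (- {0}) (hext u)" using F_smooth by (rule Cinf_Ck)
  have QS: "sph_par q' \<in> - {0}" for q' by simp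
  have dif: "hext u differentiable (at (sph_par q))" using Cinf_diff[OF F_smooth QS] .
  have hom: "fd (hext u) (sph_par q) (sph_par q) = 0" by (rule fd_hext_hom[OF dif])
  have gg: "gg = (\<lambda>q. hext u (sph_par q))" by (simp add: gg_def[abs_def])
  note l1 = link1[OF dif] and l2 = link2[OF S F2 open_UNIV QS UNIV_I]
  show "dT gg q = fd (hext u) (sph_par q) (eT q)" "dP gg q = sin (fst q) * fd (hext u) (sph_par q) (eP q)"
    unfolding gg by (rule l1(1), rule l1(2))
  show "dT (dT gg) q = D2 (hext u) (sph_par q) (eT q) (eT q)" unfolding gg using l2(1) hom by simp
  show "dP (dT gg) q = sin (fst q) * D2 (hext u) (sph_par q) (eT q) (eP q) + cos (fst q) * fd (hext u) (sph_par q) (eP q)"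
    unfolding gg by (rule l2(2))
  show "dT (dP gg) q = cos (fst q) * fd (hext u) (sph_par q) (eP q) + sin (fst q) * D2 (hext u) (sph_par q) (eP q) (eT q)"
    unfolding gg by (rule l2(3))
  show "dP (dP gg) q = sin (fst q) * sin (fst q) * D2 (hext u) (sph_par q) (eP q) (eP q) - sin (fst q) * cos (fst q) * fd (hext u) (sph_par q) (eT q)"
    unfolding gg using l2(4) hom by simp
qed

lemma Phi_links:
  assumes q: "q \<in> QU"
  shows "dT hh q = fd (hext phi) (sph_par q) (eT q)"
    "dP hh q = sin (fst q) * fd (hext phi) (sph_par q) (eP q)"
    "dT (dT hh) q = D2 (hext phi) (sph_par q) (eT q) (eT q)"
    "dP (dT hh) q = sin (fst q) * D2 (hext phi) (sph_par q) (eT q) (eP q) + cos (fst q) * fd (hext phi) (sph_par q) (eP q)"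
    "dT (dP hh) q = cos (fst q) * fd (hext phi) (sph_par q) (eP q) + sin (fst q) * D2 (hext phi) (sph_par q) (eP q) (eT q)"
    "dP (dP hh) q = sin (fst q) * sin (fst q) * D2 (hext phi) (sph_par q) (eP q) (eP q) - sin (fst q) * cos (fst q) * fd (hext phi) (sph_par q) (eT q)"
proof -
  have F2: "Ck 2 (scone U) (hext phi)" using Phi_smooth by (rule Cinf_Ck)
  have QS: "q' \<in> QU \<Longrightarrow> sph_par q' \<in> scone U" for q' by (rule pU_SU)
  have dif: "hext phi differentiable (at (sph_par q))" using Cinf_diff[OF Phi_smooth QS[OF q]] .
  have hom: "fd (hext phi) (sph_par q) (sph_par q) = 0" by (rule fd_hext_hom[OF dif])
  have hh: "hh = (\<lambda>q. hext phi (sph_par q))" by (simp add: hh_def[abs_def])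
  note l1 = link1[OF dif] and l2 = link2[OF SU_open F2 QU_open QS q]
  show "dT hh q = fd (hext phi) (sph_par q) (eT q)" "dP hh q = sin (fst q) * fd (hext phi) (sph_par q) (eP q)"
    unfolding hh by (rule l1(1), rule l1(2))
  show "dT (dT hh) q = D2 (hext phi) (sph_par q) (eT q) (eT q)" unfolding hh using l2(1) hom by simp
  show "dP (dT hh) q = sin (fst q) * D2 (hext phi) (sph_par q) (eT q) (eP q) + cos (fst q) * fd (hext phi) (sph_par q) (eP q)"
    unfolding hh by (rule l2(2))
  show "dT (dP hh) q = cos (fst q) * fd (hext phi) (sph_par q) (eP q) + sin (fst q) * D2 (hext phi) (sph_par q) (eP q) (eT q)"
    unfolding hh by (rule l2(3))
  show "dP (dP hh) q = sin (fst q) * sin (fst q) * D2 (hext phi) (sph_par q) (eP q) (eP q) - sin (fst q) * cos (fst q) * fd (hext phi) (sph_par q) (eT q)"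
    unfolding hh using l2(4) hom by simp
qed

end



context sphctx
begin

definition "f1 x = (if x \<in> U then sph_div Y x / 2 * (2 * sph_hess_sq u x - (sph_lap u x)^2) else 0)"
definition "f2 x = (if x \<in> U then sph_div Y x / 2 * (sph_lap u x + 2 * u x)^2 else 0)"
definition "f3 x = (if x \<in> U then u x * sph_hess_pair (\<lambda>y. sph_div Y y / 2) u x else 0)"

abbreviation "HH v w q \<equiv> D2 (hext u) (sph_par q) (v q) (w q)"
abbreviation "KK v w q \<equiv> D2 (hext phi) (sph_par q) (v q) (w q)"

lemma bil_F: "bilinear (D2 (hext u) (sph_par q))"
  by (rule D2_bilinear[OF _ Cinf_Ck[OF F_smooth]]) (auto simp: open_Compl)

lemma bil_Phi: "q \<in> QU \<Longrightarrow> bilinear (D2 (hext phi) (sph_par q))"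
  by (rule D2_bilinear[OF SU_open Cinf_Ck[OF Phi_smooth] pU_SU])

lemma frame_f:
  assumes q: "q \<in> QU"
  shows "f1 (sph_par q) = phi (sph_par q) * (2 * ((HH eT eT q)^2 + (HH eT eP q)^2 + (HH eP eT q)^2 + (HH eP eP q)^2)
            - (HH eT eT q + HH eP eP q)^2)"
    "f2 (sph_par q) = phi (sph_par q) * (HH eT eT q + HH eP eP q + 2 * hext u (sph_par q))^2"
    "f3 (sph_par q) = hext u (sph_par q) * (KK eT eT q * (HH eT eT q - (HH eT eT q + HH eP eP q) / 2)
         + KK eT eP q * HH eT eP q + KK eP eT q * HH eP eT q + KK eP eP q * (HH eP eP q - (HH eT eT q + HH eP eP q) / 2))"
proof -
  have pU: "sph_par q \<in> U" using q by (simp add: QU_def)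
  have uu: "u (sph_par q) = hext u (sph_par q)" by (simp add: hext_sphere)
  have ph: "(\<lambda>y. sph_div Y y / 2) = phi" by (simp add: phi_def)
  note BF = bil_F[of q] and BK = bil_Phi[OF q]
  have lap: "sph_lap u (sph_par q) = HH eT eT q + HH eP eP q"
    unfolding sph_lap_def sph_hess_def by (rule frame_sum[OF BF])
  have hsq: "sph_hess_sq u (sph_par q) = (HH eT eT q)^2 + (HH eT eP q)^2 + (HH eP eT q)^2 + (HH eP eP q)^2"
    unfolding sph_hess_sq_def sph_hess_def power2_eq_square by (rule frame_sum2[OF BF BF])
  have s1: "(\<Sum>b\<in>Basis. \<Sum>c\<in>Basis. D2 (hext phi) (sph_par q) (tproj (sph_par q) b) (tproj (sph_par q) c) *
        D2 (hext u) (sph_par q) (tproj (sph_par q) b) (tproj (sph_par q) c))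
     = KK eT eT q * HH eT eT q + KK eT eP q * HH eT eP q + KK eP eT q * HH eP eT q + KK eP eP q * HH eP eP q"
    by (rule frame_sum2[OF BK BF])
  have s2: "(\<Sum>b\<in>Basis. \<Sum>c\<in>Basis. D2 (hext phi) (sph_par q) (tproj (sph_par q) b) (tproj (sph_par q) c) *
        (tproj (sph_par q) b \<bullet> tproj (sph_par q) c)) = KK eT eT q + KK eP eP q"
    using frame_sum2[OF BK bilinear_inner3, of q] by simp
  have pair: "sph_hess_pair phi u (sph_par q) = KK eT eT q * (HH eT eT q - (HH eT eT q + HH eP eP q) / 2)
         + KK eT eP q * HH eT eP q + KK eP eT q * HH eP eT q + KK eP eP q * (HH eP eP q - (HH eT eT q + HH eP eP q) / 2)"
  proof -
    have "sph_hess_pair phi u (sph_par q) =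
       (\<Sum>b\<in>Basis. \<Sum>c\<in>Basis. D2 (hext phi) (sph_par q) (tproj (sph_par q) b) (tproj (sph_par q) c) *
        D2 (hext u) (sph_par q) (tproj (sph_par q) b) (tproj (sph_par q) c))
       - sph_lap u (sph_par q) / 2 * (\<Sum>b\<in>Basis. \<Sum>c\<in>Basis. D2 (hext phi) (sph_par q) (tproj (sph_par q) b) (tproj (sph_par q) c) *
        (tproj (sph_par q) b \<bullet> tproj (sph_par q) c))"
      unfolding sph_hess_pair_def sph_hess_def
      by (simp add: right_diff_distrib sum_subtractf sum_distrib_left algebra_simps)
    then show ?thesis unfolding s1 s2 lap by (simp add: field_simps)
  qed
  show "f1 (sph_par q) = phi (sph_par q) * (2 * ((HH eT eT q)^2 + (HH eT eP q)^2 + (HH eP eT q)^2 + (HH eP eP q)^2)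
            - (HH eT eT q + HH eP eP q)^2)"
    unfolding f1_def using pU by (simp add: hsq lap phi_def)
  show "f2 (sph_par q) = phi (sph_par q) * (HH eT eT q + HH eP eP q + 2 * hext u (sph_par q))^2"
    unfolding f2_def using pU by (simp add: lap phi_def uu)
  show "f3 (sph_par q) = hext u (sph_par q) * (KK eT eT q * (HH eT eT q - (HH eT eT q + HH eP eP q) / 2)
         + KK eT eP q * HH eT eP q + KK eP eT q * HH eP eT q + KK eP eP q * (HH eP eP q - (HH eT eT q + HH eP eP q) / 2))"
    unfolding f3_def ph using pU by (simp add: pair uu)
qed


lemma QK_SK: "q \<in> QK \<Longrightarrow> sph_par q \<in> SK"
  by (auto simp: QK_def SK_def scone_def sgn_div_norm)

lemma F_zero_QK:
  assumes q: "q \<in> QK"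
  shows "hext u (sph_par q) = 0" "D2 (hext u) (sph_par q) v w = 0" "fd (hext u) (sph_par q) v = 0"
proof -
  have p: "sph_par q \<in> SK" by (rule QK_SK[OF q])
  show "hext u (sph_par q) = 0" by (rule F_zero[OF p])
  show "D2 (hext u) (sph_par q) v w = 0" by (rule D2_zero[OF SK_open p F_zero])
  show "fd (hext u) (sph_par q) v = 0" using fd_zero[OF SK_open p F_zero] by simp
qed

lemma f_zero_QK:
  assumes q: "q \<in> QK"
  shows "f1 (sph_par q) = 0" "f2 (sph_par q) = 0" "f3 (sph_par q) = 0"
proof -
  note z = F_zero_QK[OF q]
  show "f1 (sph_par q) = 0"
    by (cases "q \<in> QU") (simp_all add: frame_f z, simp add: f1_def QU_def)
  show "f2 (sph_par q) = 0"
    by (cases "q \<in> QU") (simp_all add: frame_f z, simp add: f2_def QU_def)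
  show "f3 (sph_par q) = 0"
    by (cases "q \<in> QU") (simp_all add: frame_f z, simp add: f3_def QU_def)
qed

lemma cont_HH: "continuous_on Q (HH v w)" if "continuous_on Q v" "continuous_on Q w" for Q v w
  by (rule cont_D2_comp[OF _ F_smooth _ that]) (auto simp: open_Compl)

lemma cont_KK: "continuous_on QU (KK v w)" if "continuous_on QU v" "continuous_on QU w" for v w
  by (rule cont_D2_comp[OF SU_open Phi_smooth _ that]) (use pU_SU in auto)

lemma cont_phi_sp: "continuous_on QU (\<lambda>q. phi (sph_par q))"
  by (rule continuous_on_compose2[OF Cinf_cont[OF phi_smooth] cont_sp]) (use pU_SU in auto)

lemma cont_u_sp: "continuous_on Q (\<lambda>q. hext u (sph_par q))"
  by (rule continuous_on_compose2[OF Cinf_cont[OF F_smooth] cont_sp]) auto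

lemma cont_on_UNIV:
  assumes "continuous_on QU f" "\<And>q. q \<in> QK \<Longrightarrow> f q = 0"
  shows "continuous_on UNIV f"
proof -
  have "continuous_on QK f" by (rule continuous_on_cong[THEN iffD1, OF refl _ continuous_on_const[of QK 0]]) (use assms(2) in auto)
  then show ?thesis using continuous_on_open_Un[OF QU_open QK_open assms(1)] QU_QK by simp
qed

lemma cont_f:
  "continuous_on UNIV (\<lambda>q. f1 (sph_par q) * sin (fst q))"
  "continuous_on UNIV (\<lambda>q. f2 (sph_par q) * sin (fst q))"
  "continuous_on UNIV (\<lambda>q. f3 (sph_par q) * sin (fst q))"
proof -
  note c = cont_HH[OF cont_eT cont_eT] cont_HH[OF cont_eT cont_eP] cont_HH[OF cont_eP cont_eT] cont_HH[OF cont_eP cont_eP]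
     cont_KK[OF cont_eT cont_eT] cont_KK[OF cont_eT cont_eP] cont_KK[OF cont_eP cont_eT] cont_KK[OF cont_eP cont_eP]
     cont_phi_sp cont_u_sp
  show "continuous_on UNIV (\<lambda>q. f1 (sph_par q) * sin (fst q))"
  proof (rule cont_on_UNIV)
    show "continuous_on QU (\<lambda>q. f1 (sph_par q) * sin (fst q))"
      by (rule continuous_on_eq[of _ "\<lambda>q. phi (sph_par q) * (2 * ((HH eT eT q)^2 + (HH eT eP q)^2 + (HH eP eT q)^2 + (HH eP eP q)^2)
            - (HH eT eT q + HH eP eP q)^2) * sin (fst q)"]) (intro continuous_intros c | simp add: frame_f)+
  qed (simp add: f_zero_QK)
  show "continuous_on UNIV (\<lambda>q. f2 (sph_par q) * sin (fst q))"
  proof (rule cont_on_UNIV)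
    show "continuous_on QU (\<lambda>q. f2 (sph_par q) * sin (fst q))"
      by (rule continuous_on_eq[of _ "\<lambda>q. phi (sph_par q) * (HH eT eT q + HH eP eP q + 2 * hext u (sph_par q))^2 * sin (fst q)"])
        (intro continuous_intros c | simp add: frame_f)+
  qed (simp add: f_zero_QK)
  show "continuous_on UNIV (\<lambda>q. f3 (sph_par q) * sin (fst q))"
  proof (rule cont_on_UNIV)
    show "continuous_on QU (\<lambda>q. f3 (sph_par q) * sin (fst q))"
      by (rule continuous_on_eq[of _ "\<lambda>q. hext u (sph_par q) * (KK eT eT q * (HH eT eT q - (HH eT eT q + HH eP eP q) / 2)
         + KK eT eP q * HH eT eP q + KK eP eT q * HH eP eT q + KK eP eP q * (HH eP eP q - (HH eT eT q + HH eP eP q) / 2)) * sin (fst q)"])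
        (intro continuous_intros c | simp add: frame_f)+
  qed (simp add: f_zero_QK)
qed

end



context sphctx
begin

definition "AA q = sin (fst q) * (if q \<in> QU then W1f (hext u (sph_par q)) (fd (hext u) (sph_par q) (eT q)) (fd (hext u) (sph_par q) (eP q))
   (HH eT eT q) (HH eT eP q) (HH eP eP q) (phi (sph_par q)) (fd (hext phi) (sph_par q) (eT q)) (fd (hext phi) (sph_par q) (eP q)) else 0)"

definition "BB q = (if q \<in> QU then W2f (hext u (sph_par q)) (fd (hext u) (sph_par q) (eT q)) (fd (hext u) (sph_par q) (eP q))
   (HH eT eT q) (HH eT eP q) (HH eP eP q) (phi (sph_par q)) (fd (hext phi) (sph_par q) (eT q)) (fd (hext phi) (sph_par q) (eP q)) else 0)"

definition "A1 q = (if q \<in> QU then A1f (sin (fst q)) (cos (fst q)) (gg q) (dT gg q) (dP gg q) (dT (dT gg) q) (dP (dT gg) q) (dP (dP gg) q)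
   (dT (dT (dT gg)) q) (dP (dT (dT gg)) q) (dP (dP (dT gg)) q) (hh q) (dT hh q) (dP hh q) (dT (dT hh) q) (dP (dT hh) q) else 0)"

definition "B2 q = (if q \<in> QU then B2f (sin (fst q)) (cos (fst q)) (gg q) (dT gg q) (dP gg q) (dT (dT gg) q) (dP (dT gg) q) (dP (dP gg) q)
   (dP (dT (dT gg)) q) (dP (dP (dT gg)) q) (dP (dP (dP gg)) q) (hh q) (dT hh q) (dP hh q) (dP (dT hh) q) (dP (dP hh) q) else 0)"

lemma frame_coord:
  assumes q: "q \<in> QU" and s: "sin (fst q) \<noteq> 0"
  shows "hext u (sph_par q) = gg q"
    "fd (hext u) (sph_par q) (eT q) = dT gg q"
    "fd (hext u) (sph_par q) (eP q) = dP gg q / sin (fst q)"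
    "HH eT eT q = dT (dT gg) q"
    "HH eT eP q = (dP (dT gg) q - cos (fst q) * (dP gg q / sin (fst q))) / sin (fst q)"
    "HH eP eT q = (dP (dT gg) q - cos (fst q) * (dP gg q / sin (fst q))) / sin (fst q)"
    "HH eP eP q = (dP (dP gg) q + sin (fst q) * cos (fst q) * dT gg q) / (sin (fst q) * sin (fst q))"
    "phi (sph_par q) = hh q"
    "fd (hext phi) (sph_par q) (eT q) = dT hh q"
    "fd (hext phi) (sph_par q) (eP q) = dP hh q / sin (fst q)"
    "KK eT eT q = dT (dT hh) q"
    "KK eT eP q = (dP (dT hh) q - cos (fst q) * (dP hh q / sin (fst q))) / sin (fst q)"
    "KK eP eT q = (dP (dT hh) q - cos (fst q) * (dP hh q / sin (fst q))) / sin (fst q)"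
    "KK eP eP q = (dP (dP hh) q + sin (fst q) * cos (fst q) * dT hh q) / (sin (fst q) * sin (fst q))"
proof -
  note FL = F_links[of q] and PL = Phi_links[OF q]
  have s1g: "dT (dP gg) q = dP (dT gg) q" using S1[OF open_UNIV gg_smooth] by simp
  have s1h: "dT (dP hh) q = dP (dT hh) q" using S1[OF QU_open hh_smooth q] by simp
  show "hext u (sph_par q) = gg q" by (simp add: gg_def)
  show "phi (sph_par q) = hh q" using hh_phi[OF q] by simp
  show "fd (hext u) (sph_par q) (eT q) = dT gg q" using FL(1) by simp
  show "fd (hext phi) (sph_par q) (eT q) = dT hh q" using PL(1) by simp
  show e1: "fd (hext u) (sph_par q) (eP q) = dP gg q / sin (fst q)" using FL(2) s by simp
  show e2: "fd (hext phi) (sph_par q) (eP q) = dP hh q / sin (fst q)" using PL(2) s by simp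
  show "HH eT eT q = dT (dT gg) q" using FL(3) by simp
  show "KK eT eT q = dT (dT hh) q" using PL(3) by simp
  show "HH eT eP q = (dP (dT gg) q - cos (fst q) * (dP gg q / sin (fst q))) / sin (fst q)"
    using FL(4) s unfolding e1[symmetric] by (simp add: field_simps)
  show "HH eP eT q = (dP (dT gg) q - cos (fst q) * (dP gg q / sin (fst q))) / sin (fst q)"
    using FL(5) s s1g unfolding e1[symmetric] by (simp add: field_simps)
  show "KK eT eP q = (dP (dT hh) q - cos (fst q) * (dP hh q / sin (fst q))) / sin (fst q)"
    using PL(4) s unfolding e2[symmetric] by (simp add: field_simps)
  show "KK eP eT q = (dP (dT hh) q - cos (fst q) * (dP hh q / sin (fst q))) / sin (fst q)"
    using PL(5) s s1h unfolding e2[symmetric] by (simp add: field_simps)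
  show "HH eP eP q = (dP (dP gg) q + sin (fst q) * cos (fst q) * dT gg q) / (sin (fst q) * sin (fst q))"
    using FL(6) FL(1) s by (simp add: field_simps)
  show "KK eP eP q = (dP (dP hh) q + sin (fst q) * cos (fst q) * dT hh q) / (sin (fst q) * sin (fst q))"
    using PL(6) PL(1) s by (simp add: field_simps)
qed

lemma AA_zero: "q \<in> QK \<Longrightarrow> AA q = 0"
  unfolding AA_def using F_zero_QK by (simp add: W1f_def)

lemma BB_zero: "q \<in> QK \<Longrightarrow> BB q = 0"
  unfolding BB_def using F_zero_QK by (simp add: W2f_def)

lemma gg_jets_zero:
  assumes q: "q \<in> QK"
  shows "gg q = 0" "dT gg q = 0" "dP gg q = 0" "dT (dT gg) q = 0" "dP (dT gg) q = 0" "dP (dP gg) q = 0"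
    "dT (dT (dT gg)) q = 0" "dP (dT (dT gg)) q = 0" "dP (dP (dT gg)) q = 0" "dP (dP (dP gg)) q = 0"
proof -
  note o = QK_open
  have z0: "z \<in> QK \<Longrightarrow> gg z = 0" for z by (rule gg_zero)
  have z1: "z \<in> QK \<Longrightarrow> dT gg z = 0" "z \<in> QK \<Longrightarrow> dP gg z = 0" for z using dT_zero[OF o z0] dP_zero[OF o z0] by auto
  have z2: "z \<in> QK \<Longrightarrow> dT (dT gg) z = 0" "z \<in> QK \<Longrightarrow> dP (dT gg) z = 0" "z \<in> QK \<Longrightarrow> dP (dP gg) z = 0" for z
    using dT_zero[OF o z1(1)] dP_zero[OF o z1(1)] dP_zero[OF o z1(2)] by auto
  have z3: "z \<in> QK \<Longrightarrow> dT (dT (dT gg)) z = 0" "z \<in> QK \<Longrightarrow> dP (dT (dT gg)) z = 0"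
     "z \<in> QK \<Longrightarrow> dP (dP (dT gg)) z = 0" "z \<in> QK \<Longrightarrow> dP (dP (dP gg)) z = 0" for z
    using dT_zero[OF o z2(1)] dP_zero[OF o z2(1)] dP_zero[OF o z2(2)] dP_zero[OF o z2(3)] by auto
  show "gg q = 0" "dT gg q = 0" "dP gg q = 0" "dT (dT gg) q = 0" "dP (dT gg) q = 0" "dP (dP gg) q = 0"
    "dT (dT (dT gg)) q = 0" "dP (dT (dT gg)) q = 0" "dP (dP (dT gg)) q = 0" "dP (dP (dP gg)) q = 0"
    using z0 z1 z2 z3 q by auto
qed

lemma A1_zero: "q \<in> QK \<Longrightarrow> A1 q = 0"
  unfolding A1_def using gg_jets_zero by (simp add: A1f_def)

lemma B2_zero: "q \<in> QK \<Longrightarrow> B2 q = 0"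
  unfolding B2_def using gg_jets_zero by (simp add: B2f_def)


definition "Tst = {q::real\<times>real. 0 < fst q \<and> fst q < pi}"

lemma Tst_open: "open Tst"
proof -
  have "Tst = fst -` {0<..<pi}" by (auto simp: Tst_def)
  moreover have "open (fst -` {0<..<pi::real} :: (real \<times> real) set)" by (rule open_vimage_fst) simp
  ultimately show ?thesis by simp
qed

lemma Tst_sin: "q \<in> Tst \<Longrightarrow> sin (fst q) \<noteq> 0"
  unfolding Tst_def using sin_gt_zero by force

lemma cont_on_UNIV':
  assumes "open T" "continuous_on (QU \<inter> T) f" "\<And>q. q \<in> QK \<Longrightarrow> f q = 0"
  shows "continuous_on T f"
proof -
  have "continuous_on (QK \<inter> T) f"
    by (rule continuous_on_eq[OF continuous_on_const[of _ 0]]) (use assms(3) in auto)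
  then have "continuous_on ((QU \<inter> T) \<union> (QK \<inter> T)) f"
    using continuous_on_open_Un[OF open_Int[OF QU_open assms(1)] open_Int[OF QK_open assms(1)] assms(2)] by simp
  moreover have "(QU \<inter> T) \<union> (QK \<inter> T) = T" using QU_QK by auto
  ultimately show ?thesis by simp
qed

lemma cont_fdF: "continuous_on Q (\<lambda>q. fd (hext u) (sph_par q) (v q))" if "continuous_on Q v" for Q v
  by (rule cont_fd_comp[OF _ F_smooth _ that]) (auto simp: open_Compl)

lemma cont_fdPhi: "continuous_on QU (\<lambda>q. fd (hext phi) (sph_par q) (v q))" if "continuous_on QU v" for v
  by (rule cont_fd_comp[OF SU_open Phi_smooth _ that]) (use pU_SU in auto)

lemma cont_AA: "continuous_on UNIV AA"
proof (rule cont_on_UNIV)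
  note c = cont_HH[OF cont_eT cont_eT] cont_HH[OF cont_eT cont_eP] cont_HH[OF cont_eP cont_eP]
     cont_phi_sp cont_u_sp cont_fdF[OF cont_eT] cont_fdF[OF cont_eP] cont_fdPhi[OF cont_eT] cont_fdPhi[OF cont_eP]
  have "continuous_on QU (\<lambda>q. sin (fst q) * W1f (hext u (sph_par q)) (fd (hext u) (sph_par q) (eT q)) (fd (hext u) (sph_par q) (eP q))
   (HH eT eT q) (HH eT eP q) (HH eP eP q) (phi (sph_par q)) (fd (hext phi) (sph_par q) (eT q)) (fd (hext phi) (sph_par q) (eP q)))"
    unfolding W1f_def by (intro continuous_intros c) auto
  then show "continuous_on QU AA"
    by (rule continuous_on_eq) (simp add: AA_def)
qed (rule AA_zero)

lemma cont_jets:
  "continuous_on Q (dT gg)" "continuous_on Q (dP gg)" "continuous_on Q (dT (dT gg))" "continuous_on Q (dP (dT gg))"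
  "continuous_on Q (dP (dP gg))" "continuous_on Q (dT (dT (dT gg)))" "continuous_on Q (dP (dT (dT gg)))"
  "continuous_on Q (dP (dP (dT gg)))" "continuous_on Q (dP (dP (dP gg)))" "continuous_on Q gg"
  using gg_smooth by (auto intro!: Cinf_cont[THEN continuous_on_subset] Cinf_dT Cinf_dP)

lemma cont_hjets:
  "continuous_on QU hh" "continuous_on QU (dT hh)" "continuous_on QU (dP hh)" "continuous_on QU (dT (dT hh))"
  "continuous_on QU (dP (dT hh))" "continuous_on QU (dP (dP hh))"
  using hh_smooth by (auto intro!: Cinf_cont Cinf_dT Cinf_dP)

lemma cont_A1: "continuous_on Tst A1"
proof (rule cont_on_UNIV'[OF Tst_open])
  have nz: "\<forall>q\<in>QU \<inter> Tst. sin (fst q) \<noteq> 0" using Tst_sin by auto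
  note c = cont_jets cont_hjets[THEN continuous_on_subset[OF _ Int_lower1]]
  have "continuous_on (QU \<inter> Tst) (\<lambda>q. A1f (sin (fst q)) (cos (fst q)) (gg q) (dT gg q) (dP gg q) (dT (dT gg) q) (dP (dT gg) q) (dP (dP gg) q)
   (dT (dT (dT gg)) q) (dP (dT (dT gg)) q) (dP (dP (dT gg)) q) (hh q) (dT hh q) (dP hh q) (dT (dT hh) q) (dP (dT hh) q))"
    unfolding A1f_def Let_def by (intro continuous_intros c) (use nz in auto)
  then show "continuous_on (QU \<inter> Tst) A1"
    by (rule continuous_on_eq) (simp add: A1_def)
qed (rule A1_zero)

end



context sphctx
begin

lemma QUT_open: "open (QU \<inter> Tst)" using QU_open Tst_open by auto

lemma derivA:
  assumes t: "(t, y) \<in> Tst"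
  shows "((\<lambda>t'. AA (t', y)) has_real_derivative A1 (t, y)) (at t)"
proof (cases "(t, y) \<in> QU")
  case True
  have q: "(t, y) \<in> QU \<inter> Tst" using True t by simp
  note gs = gg_smooth and hs = hh_smooth
  have d1: "((\<lambda>t. gg (t, y)) has_real_derivative dT gg (t, y)) (at t)" by (rule deriv_T'[OF gs]) simp
  have d2: "((\<lambda>t. dT gg (t, y)) has_real_derivative dT (dT gg) (t, y)) (at t)" by (rule deriv_T'[OF Cinf_dT[OF gs]]) simp
  have d3: "((\<lambda>t. dP gg (t, y)) has_real_derivative dP (dT gg) (t, y)) (at t)"
    using deriv_T'[OF Cinf_dP[OF gs], of t y] S1[OF open_UNIV gs, of "(t, y)"] by simp
  have d4: "((\<lambda>t. dT (dT gg) (t, y)) has_real_derivative dT (dT (dT gg)) (t, y)) (at t)"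
    by (rule deriv_T'[OF Cinf_dT[OF Cinf_dT[OF gs]]]) simp
  have d5: "((\<lambda>t. dP (dT gg) (t, y)) has_real_derivative dP (dT (dT gg)) (t, y)) (at t)"
    using deriv_T'[OF Cinf_dP[OF Cinf_dT[OF gs]], of t y] S2[OF open_UNIV gs, of "(t, y)"] by simp
  have d6: "((\<lambda>t. dP (dP gg) (t, y)) has_real_derivative dP (dP (dT gg)) (t, y)) (at t)"
    using deriv_T'[OF Cinf_dP[OF Cinf_dP[OF gs]], of t y] S3[OF open_UNIV gs, of "(t, y)"] by simp
  have d7: "((\<lambda>t. hh (t, y)) has_real_derivative dT hh (t, y)) (at t)" by (rule deriv_T'[OF hs True])
  have d8: "((\<lambda>t. dT hh (t, y)) has_real_derivative dT (dT hh) (t, y)) (at t)" by (rule deriv_T'[OF Cinf_dT[OF hs] True])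
  have d9: "((\<lambda>t. dP hh (t, y)) has_real_derivative dP (dT hh) (t, y)) (at t)"
    using deriv_T'[OF Cinf_dP[OF hs] True] S1[OF QU_open hs True] by simp
  have s: "sin t \<noteq> 0" using Tst_sin[OF t] by simp
  note AD = A_deriv[where Gzz="\<lambda>t. gg (t, y)" and Gtz="\<lambda>t. dT gg (t, y)" and Gzp="\<lambda>t. dP gg (t, y)"
      and Gtt="\<lambda>t. dT (dT gg) (t, y)" and Gtp="\<lambda>t. dP (dT gg) (t, y)" and Gpp="\<lambda>t. dP (dP gg) (t, y)"
      and Gttt="\<lambda>t. dT (dT (dT gg)) (t, y)" and Gttp="\<lambda>t. dP (dT (dT gg)) (t, y)" and Gtpp="\<lambda>t. dP (dP (dT gg)) (t, y)"
      and Hzz="\<lambda>t. hh (t, y)" and Htz="\<lambda>t. dT hh (t, y)" and Hzp="\<lambda>t. dP hh (t, y)"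
      and Htt="\<lambda>t. dT (dT hh) (t, y)" and Htp="\<lambda>t. dP (dT hh) (t, y)", OF d1 d2 d3 d4 d5 d6 d7 d8 d9 s]
  have eq: "t' \<in> {t'. (t', y) \<in> QU \<inter> Tst} \<Longrightarrow>
     sin t' * W1f (gg (t', y)) (dT gg (t', y)) (dP gg (t', y) / sin t') (dT (dT gg) (t', y))
        ((dP (dT gg) (t', y) - cos t' * (dP gg (t', y) / sin t')) / sin t')
        ((dP (dP gg) (t', y) + sin t' * cos t' * dT gg (t', y)) / (sin t' * sin t'))
        (hh (t', y)) (dT hh (t', y)) (dP hh (t', y) / sin t') = AA (t', y)" for t'
  proof -
    assume "t' \<in> {t'. (t', y) \<in> QU \<inter> Tst}"
    then have q': "(t', y) \<in> QU" "sin (fst (t', y)) \<noteq> 0" using Tst_sin by auto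
    note fc = frame_coord[OF q']
    show ?thesis unfolding AA_def using q'(1) fc by simp
  qed
  have "((\<lambda>t'. AA (t', y)) has_real_derivative A1f (sin t) (cos t) (gg (t, y)) (dT gg (t, y)) (dP gg (t, y))
       (dT (dT gg) (t, y)) (dP (dT gg) (t, y)) (dP (dP gg) (t, y)) (dT (dT (dT gg)) (t, y)) (dP (dT (dT gg)) (t, y))
       (dP (dP (dT gg)) (t, y)) (hh (t, y)) (dT hh (t, y)) (dP hh (t, y)) (dT (dT hh) (t, y)) (dP (dT hh) (t, y))) (at t)"
    by (rule has_field_derivative_transform_within_open[OF AD open_slice_T[OF QUT_open]]) (use q eq in auto)
  then show ?thesis using True by (simp add: A1_def)
next
  case False
  then have q: "(t, y) \<in> QK" using QU_QK by auto
  have "((\<lambda>t'. AA (t', y)) has_real_derivative 0) (at t)"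
    by (rule has_field_derivative_transform_within_open[OF DERIV_const open_slice_T[OF QK_open]])
       (use q AA_zero in auto)
  then show ?thesis using False by (simp add: A1_def)
qed

lemma derivB:
  assumes t: "(t, y) \<in> Tst"
  shows "((\<lambda>y'. BB (t, y')) has_real_derivative B2 (t, y)) (at y)"
proof (cases "(t, y) \<in> QU")
  case True
  have q: "(t, y) \<in> QU \<inter> Tst" using True t by simp
  note gs = gg_smooth and hs = hh_smooth
  have d1: "((\<lambda>y. gg (t, y)) has_real_derivative dP gg (t, y)) (at y)" by (rule deriv_P'[OF gs]) simp
  have d2: "((\<lambda>y. dT gg (t, y)) has_real_derivative dP (dT gg) (t, y)) (at y)" by (rule deriv_P'[OF Cinf_dT[OF gs]]) simp
  have d3: "((\<lambda>y. dP gg (t, y)) has_real_derivative dP (dP gg) (t, y)) (at y)" by (rule deriv_P'[OF Cinf_dP[OF gs]]) simp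
  have d4: "((\<lambda>y. dT (dT gg) (t, y)) has_real_derivative dP (dT (dT gg)) (t, y)) (at y)"
    by (rule deriv_P'[OF Cinf_dT[OF Cinf_dT[OF gs]]]) simp
  have d5: "((\<lambda>y. dP (dT gg) (t, y)) has_real_derivative dP (dP (dT gg)) (t, y)) (at y)"
    by (rule deriv_P'[OF Cinf_dP[OF Cinf_dT[OF gs]]]) simp
  have d6: "((\<lambda>y. dP (dP gg) (t, y)) has_real_derivative dP (dP (dP gg)) (t, y)) (at y)"
    by (rule deriv_P'[OF Cinf_dP[OF Cinf_dP[OF gs]]]) simp
  have d7: "((\<lambda>y. hh (t, y)) has_real_derivative dP hh (t, y)) (at y)" by (rule deriv_P'[OF hs True])
  have d8: "((\<lambda>y. dT hh (t, y)) has_real_derivative dP (dT hh) (t, y)) (at y)" by (rule deriv_P'[OF Cinf_dT[OF hs] True])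
  have d9: "((\<lambda>y. dP hh (t, y)) has_real_derivative dP (dP hh) (t, y)) (at y)" by (rule deriv_P'[OF Cinf_dP[OF hs] True])
  have s: "sin t \<noteq> 0" using Tst_sin[OF t] by simp
  note BD = B_deriv[where Gzz="\<lambda>y. gg (t, y)" and Gtz="\<lambda>y. dT gg (t, y)" and Gzp="\<lambda>y. dP gg (t, y)"
      and Gtt="\<lambda>y. dT (dT gg) (t, y)" and Gtp="\<lambda>y. dP (dT gg) (t, y)" and Gpp="\<lambda>y. dP (dP gg) (t, y)"
      and Gttp="\<lambda>y. dP (dT (dT gg)) (t, y)" and Gtpp="\<lambda>y. dP (dP (dT gg)) (t, y)" and Gppp="\<lambda>y. dP (dP (dP gg)) (t, y)"
      and Hzz="\<lambda>y. hh (t, y)" and Htz="\<lambda>y. dT hh (t, y)" and Hzp="\<lambda>y. dP hh (t, y)"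
      and Htp="\<lambda>y. dP (dT hh) (t, y)" and Hpp="\<lambda>y. dP (dP hh) (t, y)" and c="cos t", OF d1 d2 d3 d4 d5 d6 d7 d8 d9 s]
  have eq: "y' \<in> {y'. (t, y') \<in> QU \<inter> Tst} \<Longrightarrow>
     W2f (gg (t, y')) (dT gg (t, y')) (dP gg (t, y') / sin t) (dT (dT gg) (t, y'))
        ((dP (dT gg) (t, y') - cos t * (dP gg (t, y') / sin t)) / sin t)
        ((dP (dP gg) (t, y') + sin t * cos t * dT gg (t, y')) / (sin t * sin t))
        (hh (t, y')) (dT hh (t, y')) (dP hh (t, y') / sin t) = BB (t, y')" for y'
  proof -
    assume "y' \<in> {y'. (t, y') \<in> QU \<inter> Tst}"
    then have q': "(t, y') \<in> QU" "sin (fst (t, y')) \<noteq> 0" using Tst_sin by auto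
    note fc = frame_coord[OF q']
    show ?thesis unfolding BB_def using q'(1) fc by simp
  qed
  have "((\<lambda>y'. BB (t, y')) has_real_derivative B2f (sin t) (cos t) (gg (t, y)) (dT gg (t, y)) (dP gg (t, y))
       (dT (dT gg) (t, y)) (dP (dT gg) (t, y)) (dP (dP gg) (t, y)) (dP (dT (dT gg)) (t, y)) (dP (dP (dT gg)) (t, y))
       (dP (dP (dP gg)) (t, y)) (hh (t, y)) (dT hh (t, y)) (dP hh (t, y)) (dP (dT hh) (t, y)) (dP (dP hh) (t, y))) (at y)"
    by (rule has_field_derivative_transform_within_open[OF BD open_slice_P[OF QUT_open]]) (use q eq in auto)
  then show ?thesis using True by (simp add: B2_def)
next
  case False
  then have q: "(t, y) \<in> QK" using QU_QK by auto
  have "((\<lambda>y'. BB (t, y')) has_real_derivative 0) (at y)"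
    by (rule has_field_derivative_transform_within_open[OF DERIV_const open_slice_P[OF QK_open]])
       (use q BB_zero in auto)
  then show ?thesis using False by (simp add: B2_def)
qed


lemma I_eq:
  assumes t: "q \<in> Tst"
  shows "f2 (sph_par q) * sin (fst q) + 2 * (f3 (sph_par q) * sin (fst q)) - f1 (sph_par q) * sin (fst q) = A1 q + B2 q"
proof (cases "q \<in> QU")
  case True
  have s: "sin (fst q) \<noteq> 0" by (rule Tst_sin[OF t])
  define S where "S = sin (fst q)"
  define C where "C = cos (fst q)"
  have I1: "f2 (sph_par q) + 2 * f3 (sph_par q) - f1 (sph_par q) =
     Iframe (gg q) (hh q) (dT (dT gg) q)
       ((dP (dT gg) q - C * (dP gg q / S)) / S) ((dP (dT gg) q - C * (dP gg q / S)) / S)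
       ((dP (dP gg) q + S * C * dT gg q) / (S * S))
       (dT (dT hh) q) ((dP (dT hh) q - C * (dP hh q / S)) / S) ((dP (dT hh) q - C * (dP hh q / S)) / S)
       ((dP (dP hh) q + S * C * dT hh q) / (S * S))"
    unfolding frame_f[OF True] Iframe_def frame_coord[OF True s] S_def C_def by simp
  have L: "dT (dT hh) q + (dP (dP hh) q + S * C * dT hh q) / (S * S) + 2 * hh q = 0"
    using lap_h[OF True s] unfolding S_def C_def .
  have M: "A1 q + B2 q = S * Iframe (gg q) (hh q) (dT (dT gg) q)
       ((dP (dT gg) q - C * (dP gg q / S)) / S) ((dP (dT gg) q - C * (dP gg q / S)) / S)
       ((dP (dP gg) q + S * C * dT gg q) / (S * S))
       (dT (dT hh) q) ((dP (dT hh) q - C * (dP hh q / S)) / S) ((dP (dT hh) q - C * (dP hh q / S)) / S)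
       ((dP (dP hh) q + S * C * dT hh q) / (S * S))
     - S * (gg q * (dT (dT gg) q + (dP (dP gg) q + S * C * dT gg q) / (S * S)) + 2 * gg q * gg q) *
       (dT (dT hh) q + (dP (dP hh) q + S * C * dT hh q) / (S * S) + 2 * hh q)"
    unfolding A1_def B2_def using True alg_main[of S] s unfolding S_def C_def by simp
  have "f2 (sph_par q) * sin (fst q) + 2 * (f3 (sph_par q) * sin (fst q)) - f1 (sph_par q) * sin (fst q)
     = S * (f2 (sph_par q) + 2 * f3 (sph_par q) - f1 (sph_par q))" unfolding S_def by (simp add: algebra_simps)
  also have "\<dots> = A1 q + B2 q" unfolding I1 M L by simp
  finally show ?thesis .
next
  case False
  then have "q \<in> QK" using QU_QK by auto
  then show ?thesis using False by (simp add: A1_zero B2_zero f1_def f2_def f3_def QU_def)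
qed

lemma BB_periodic: "BB (t, 2 * pi) = BB (t, 0)"
proof -
  have "sph_par (t, 2 * pi) = sph_par (t, 0)" "eT (t, 2 * pi) = eT (t, 0)" "eP (t, 2 * pi) = eP (t, 0)"
    by (simp_all add: sph_par_def eT_def eP_def)
  moreover have "(t, 2 * pi) \<in> QU \<longleftrightarrow> (t, 0) \<in> QU" using calculation by (simp add: QU_def)
  ultimately show ?thesis unfolding BB_def by simp
qed

lemma AA_poles: "AA (0, y) = 0" "AA (pi, y) = 0"
  by (simp_all add: AA_def)

end



context sphctx
begin

definition "II q = f2 (sph_par q) * sin (fst q) + 2 * (f3 (sph_par q) * sin (fst q)) - f1 (sph_par q) * sin (fst q)"

lemma cont_II: "continuous_on UNIV II"
  unfolding II_def[abs_def]
  by (rule continuous_on_diff[OF continuous_on_add[OF cont_f(2) continuous_on_mult[OF continuous_on_const cont_f(3)]] cont_f(1)])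

definition "alpha t = integral (cbox 0 (2 * pi)) (\<lambda>y. AA (t, y))"
definition "alpha' t = integral (cbox 0 (2 * pi)) (\<lambda>y. A1 (t, y))"

lemma strip_sub: "t \<in> {0<..<pi} \<Longrightarrow> (t, y) \<in> Tst" by (simp add: Tst_def)

lemma inner_int:
  assumes t: "t \<in> {0<..<pi}"
  shows "((\<lambda>y. II (t, y)) has_integral alpha' t) (cbox 0 (2 * pi))"
proof -
  have cA1: "continuous_on (cbox 0 (2 * pi)) (\<lambda>y. A1 (t, y))"
  proof (rule continuous_on_compose2[OF cont_A1])
    show "continuous_on (cbox 0 (2 * pi)) (\<lambda>y. (t, y))" by (intro continuous_intros)
  qed (use strip_sub[OF t] in auto)
  have h1: "((\<lambda>y. A1 (t, y)) has_integral alpha' t) (cbox 0 (2 * pi))"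
    unfolding alpha'_def by (rule integrable_integral[OF integrable_continuous[OF cA1]])
  have h2: "((\<lambda>y. B2 (t, y)) has_integral (BB (t, 2 * pi) - BB (t, 0))) {0..2 * pi}"
  proof (rule fundamental_theorem_of_calculus)
    fix y assume "y \<in> {0..2 * pi}"
    have "((\<lambda>y'. BB (t, y')) has_real_derivative B2 (t, y)) (at y)" by (rule derivB[OF strip_sub[OF t]])
    then show "((\<lambda>y'. BB (t, y')) has_vector_derivative B2 (t, y)) (at y within {0..2 * pi})"
      by (simp add: has_real_derivative_iff_has_vector_derivative has_vector_derivative_at_within)
  qed simp
  have h2': "((\<lambda>y. B2 (t, y)) has_integral 0) (cbox 0 (2 * pi))" using h2 BB_periodic by simp
  have "((\<lambda>y. A1 (t, y) + B2 (t, y)) has_integral (alpha' t + 0)) (cbox 0 (2 * pi))"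
    by (rule has_integral_add[OF h1 h2'])
  moreover have "II (t, y) = A1 (t, y) + B2 (t, y)" for y
    using I_eq[OF strip_sub[OF t]] by (simp add: II_def)
  ultimately show ?thesis by simp
qed

lemma cont_alpha: "continuous_on {0..pi} alpha"
proof -
  have "continuous_on ({0..pi} \<times> cbox 0 (2 * pi)) (\<lambda>(x, t). AA (x, t))"
    using continuous_on_subset[OF cont_AA] by (simp add: case_prod_beta')
  then have "continuous_on {0..pi} (\<lambda>x. integral (cbox 0 (2 * pi)) (\<lambda>y. AA (x, y)))"
    by (rule integral_continuous_on_param)
  then show ?thesis unfolding alpha_def[abs_def] .
qed

lemma deriv_alpha:
  assumes t: "t \<in> {0<..<pi}"
  shows "(alpha has_real_derivative alpha' t) (at t)"
proof -
  have cAA: "continuous_on (cbox 0 (2 * pi)) (\<lambda>y. AA (x, y))" for x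
  proof -
    have "continuous_on (cbox 0 (2 * pi)) (\<lambda>y::real. (x, y))" by (intro continuous_intros)
    then show ?thesis using continuous_on_compose2[OF cont_AA] by blast
  qed
  have "continuous_on ({0<..<pi} \<times> cbox 0 (2 * pi)) A1"
    by (rule continuous_on_subset[OF cont_A1]) (auto simp: Tst_def)
  then have cA1: "continuous_on ({0<..<pi} \<times> cbox 0 (2 * pi)) (\<lambda>(x, y). A1 (x, y))" by simp
  have "((\<lambda>x. integral (cbox 0 (2 * pi)) (\<lambda>y. AA (x, y))) has_field_derivative
      integral (cbox 0 (2 * pi)) (\<lambda>y. A1 (t, y))) (at t within {0<..<pi})"
  proof (rule leibniz_rule_field_derivative[OF _ _ cA1 t])
    fix x y assume x: "x \<in> {0<..<pi}" and "y \<in> cbox 0 (2 * pi)"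
    show "((\<lambda>x. AA (x, y)) has_field_derivative A1 (x, y)) (at x within {0<..<pi})"
      by (rule has_field_derivative_at_within[OF derivA[OF strip_sub[OF x]]])
  next
    fix x show "(\<lambda>y. AA (x, y)) integrable_on cbox 0 (2 * pi)" by (rule integrable_continuous[OF cAA])
  qed (rule convex_real_interval)
  then show ?thesis unfolding alpha_def[abs_def] alpha'_def
    using at_within_open[OF t open_greaterThanLessThan] by simp
qed

lemma alpha_poles: "alpha 0 = 0" "alpha pi = 0"
  unfolding alpha_def by (simp_all add: AA_poles)

lemma outer_int: "((\<lambda>t. integral (cbox 0 (2 * pi)) (\<lambda>y. II (t, y))) has_integral 0) (cbox 0 pi)"
proof -
  have "(alpha' has_integral (alpha pi - alpha 0)) {0..pi}"
  proof (rule fundamental_theorem_of_calculus_interior[OF _ cont_alpha])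
    fix t assume "t \<in> {0<..<pi}"
    then show "(alpha has_vector_derivative alpha' t) (at t)"
      using deriv_alpha by (simp add: has_real_derivative_iff_has_vector_derivative)
  qed simp
  then have h: "(alpha' has_integral 0) (cbox 0 pi)" by (simp add: alpha_poles)
  show ?thesis
  proof (rule has_integral_spike[OF _ _ h])
    show "negligible {0, pi}" by simp
    fix t assume "t \<in> cbox 0 pi - {0, pi}"
    then have "t \<in> {0<..<pi}" by auto
    then show "integral (cbox 0 (2 * pi)) (\<lambda>y. II (t, y)) = alpha' t"
      using inner_int integral_unique by blast
  qed
qed

lemma II_zero: "integral (cbox (0, 0) (pi, 2 * pi)) II = 0"
proof -
  have "integral (cbox (0, 0) (pi, 2 * pi)) II = integral (cbox 0 pi) (\<lambda>t. integral (cbox 0 (2 * pi)) (\<lambda>y. II (t, y)))"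
    by (rule integral_prod_continuous[OF continuous_on_subset[OF cont_II]]) simp
  also have "\<dots> = 0" using outer_int integral_unique by blast
  finally show ?thesis .
qed

end



theorem mainTheorem16:
  fixes U :: "(real^3) set" and Y :: "real^3 \<Rightarrow> real^3" and u :: "real^3 \<Rightarrow> real"
  assumes "U \<subseteq> sphere 0 1"
    and "openin (top_of_set (sphere 0 1)) U"
    and "Cinf_on (scone U) (hext Y)"
    and "\<forall>x\<in>U. Y x \<bullet> x = 0"
    and "conformal_killing_on U Y"
    and "Cinf_on (scone U) (hext u)"
    and "\<exists>K. compact K \<and> K \<subseteq> U \<and> (\<forall>x\<in>sphere 0 1 - K. u x = 0)"
  shows "sphere_integral_on U (\<lambda>x. sph_div Y x / 2 * (2 * sph_hess_sq u x - (sph_lap u x)^2))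
       = sphere_integral_on U (\<lambda>x. sph_div Y x / 2 * (sph_lap u x + 2 * u x)^2)
         + 2 * sphere_integral_on U (\<lambda>x. u x * sph_hess_pair (\<lambda>y. sph_div Y y / 2) u x)"
proof -
  obtain K where K: "compact K" "K \<subseteq> U" "\<forall>x\<in>sphere 0 1 - K. u x = 0" using assms(7) by blast
  interpret sphctx U Y u K using assms(1-6) K by unfold_locales auto
  define R where "R = cbox (0::real, 0::real) (pi, 2 * pi)"
  have e1: "sphere_integral_on U (\<lambda>x. sph_div Y x / 2 * (2 * sph_hess_sq u x - (sph_lap u x)^2))
      = integral R (\<lambda>p. f1 (sph_par p) * sin (fst p))"
    unfolding sphere_integral_on_def sphere_integral_def R_def f1_def ..
  have e2: "sphere_integral_on U (\<lambda>x. sph_div Y x / 2 * (sph_lap u x + 2 * u x)^2)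
      = integral R (\<lambda>p. f2 (sph_par p) * sin (fst p))"
    unfolding sphere_integral_on_def sphere_integral_def R_def f2_def ..
  have e3: "sphere_integral_on U (\<lambda>x. u x * sph_hess_pair (\<lambda>y. sph_div Y y / 2) u x)
      = integral R (\<lambda>p. f3 (sph_par p) * sin (fst p))"
    unfolding sphere_integral_on_def sphere_integral_def R_def f3_def ..
  have i1: "(\<lambda>p. f1 (sph_par p) * sin (fst p)) integrable_on R"
    unfolding R_def by (rule integrable_continuous[OF continuous_on_subset[OF cont_f(1)]]) simp
  have i2: "(\<lambda>p. f2 (sph_par p) * sin (fst p)) integrable_on R"
    unfolding R_def by (rule integrable_continuous[OF continuous_on_subset[OF cont_f(2)]]) simp
  have i3: "(\<lambda>p. f3 (sph_par p) * sin (fst p)) integrable_on R"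
    unfolding R_def by (rule integrable_continuous[OF continuous_on_subset[OF cont_f(3)]]) simp
  have i3': "(\<lambda>p. 2 * (f3 (sph_par p) * sin (fst p))) integrable_on R"
    using integrable_on_mult_right[OF i3, of 2] by simp
  have "integral R II = integral R (\<lambda>p. f2 (sph_par p) * sin (fst p)) + 2 * integral R (\<lambda>p. f3 (sph_par p) * sin (fst p))
      - integral R (\<lambda>p. f1 (sph_par p) * sin (fst p))"
    unfolding II_def[abs_def]
    by (simp add: integral_diff[OF integrable_add[OF i2 i3'] i1] integral_add[OF i2 i3'])
  moreover have "integral R II = 0" unfolding R_def by (rule II_zero)
  ultimately show ?thesis unfolding e1 e2 e3 by simp
qed


end
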